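(* Let $f\in\Gamma_0(\mathcal H)$ be $\nu$-strongly convex ($\nu>0$), and let $h:\mathcal H\to\mathbb R$ be convex and differentiable with $\mu$-Lipschitz gradient, of the form $h(x)=\mathsf E_\xi[H(x,\xi)]$, where $\xi$ is a random vector with distribution supported on $\Omega_P\subset\mathbb R^m$ and $H(\cdot,\xi)$ is convex. Assume $\operatorname{zer}(\partial f+\nabla h)\neq\varnothing$, that i.i.d. samples $(\xi_n)_{n\in\mathbb N}$ of $\xi$ are available, and that for every $(x,\xi)$ one can compute $\nabla H(x,\xi)$ with $\mathsf E[\nabla H(x,\xi)]=\nabla h(x)$. Let $x_0,x_{-1}\in\mathcal H$, $\gamma_n=\frac1{2\nu(n+1)}$, and for $n\in\mathbb N$: $$y_n=2x_n-x_{n-1},\qquad x_{n+1}=\operatorname{prox}_{\gamma_nf}\big(x_n-\gamma_n\nabla H(y_n,\xi_n)\big).$$ Suppose there is a constant $c$ with $\mathsf E[\|\nabla H(y_n,\xi_n)-\nabla h(y_n)\|^2\mid\xi_0,\dots,\xi_{n-1}]\le c$ for all $n$. Then $$\mathsf E\big[\|x_n-\bar x\|^2\big]=\mathcal O\big(\log(n+1)/(n+1)\big)\quad(n>n_0),$$ where $n_0$ is the smallest integer with $n_0>2\nu^{-1}\mu(1+\sqrt2)$ and $\bar x$ is the unique minimizer of $f+h$.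
   Context: $\mathcal H$ is a separable real Hilbert space. $\Gamma_0(\mathcal H)$ is the class of proper lower semicontinuous convex functions $\mathcal H\to]-\infty,+\infty]$. $\operatorname{prox}_f(x)=\operatorname{argmin}_y\big(f(y)+\tfrac12\|x-y\|^2\big)$. $f$ is $\nu$-strongly convex means $\partial f$ is $\nu$-strongly monotone: $\langle x-y,u-v\rangle\ge\nu\|x-y\|^2$ for all $u\in\partial f(x)$, $v\in\partial f(y)$. *)

theory Defs
  imports "HOL-Probability.Probability"
begin

definition proper_fun :: "('a \<Rightarrow> ereal) \<Rightarrow> bool" where
  "proper_fun f \<longleftrightarrow> (\<exists>x. f x < \<infinity>) \<and> (\<forall>x. f x > -\<infinity>)"

definition lsc_fun :: "('a::topological_space \<Rightarrow> ereal) \<Rightarrow> bool" where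
  "lsc_fun f \<longleftrightarrow> (\<forall>c. closed {x. f x \<le> c})"

definition convex_fun :: "('a::real_vector \<Rightarrow> ereal) \<Rightarrow> bool" where
  "convex_fun f \<longleftrightarrow> (\<forall>x y (t::real). 0 \<le> t \<and> t \<le> 1 \<longrightarrow>
      f ((1 - t) *\<^sub>R x + t *\<^sub>R y) \<le> ereal (1 - t) * f x + ereal t * f y)"

definition Gamma0 :: "('a::real_normed_vector \<Rightarrow> ereal) set" where
  "Gamma0 = {f. proper_fun f \<and> lsc_fun f \<and> convex_fun f}"

definition subdiff :: "('a::real_inner \<Rightarrow> ereal) \<Rightarrow> 'a \<Rightarrow> 'a set" where
  "subdiff f x = {u. f x < \<infinity> \<and> (\<forall>y. f x + ereal (inner u (y - x)) \<le> f y)}"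

definition strongly_convex :: "real \<Rightarrow> ('a::real_inner \<Rightarrow> ereal) \<Rightarrow> bool" where
  "strongly_convex \<nu> f \<longleftrightarrow> (\<forall>x y u v. u \<in> subdiff f x \<longrightarrow> v \<in> subdiff f y \<longrightarrow>
      inner (x - y) (u - v) \<ge> \<nu> * (norm (x - y))\<^sup>2)"

definition prox :: "('a::real_normed_vector \<Rightarrow> ereal) \<Rightarrow> 'a \<Rightarrow> 'a" where
  "prox f x = (THE p. \<forall>y. f p + ereal ((norm (x - p))\<^sup>2 / 2) \<le> f y + ereal ((norm (x - y))\<^sup>2 / 2))"

definition step :: "real \<Rightarrow> nat \<Rightarrow> real" where
  "step \<nu> n = 1 / (2 * \<nu> * (real n + 1))"

text \<open>State (x_n, x_(n-1)) of the iteration, driven by a sample path z_n = xi_n(omega);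
  G x z stands for the stochastic gradient nabla H(x, z).\<close>
primrec fbf_state :: "('a::real_normed_vector \<Rightarrow> ereal) \<Rightarrow> ('a \<Rightarrow> 'b \<Rightarrow> 'a) \<Rightarrow> real
    \<Rightarrow> 'a \<Rightarrow> 'a \<Rightarrow> (nat \<Rightarrow> 'b) \<Rightarrow> nat \<Rightarrow> 'a \<times> 'a" where
  "fbf_state f G \<nu> x0 xm1 z 0 = (x0, xm1)"
| "fbf_state f G \<nu> x0 xm1 z (Suc n) =
     (let xn = fst (fbf_state f G \<nu> x0 xm1 z n);
          xp = snd (fbf_state f G \<nu> x0 xm1 z n);
          yn = 2 *\<^sub>R xn - xp
      in (prox (\<lambda>u. ereal (step \<nu> n) * f u) (xn - step \<nu> n *\<^sub>R G yn (z n)), xn))"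

definition fbf_x where
  "fbf_x f G \<nu> x0 xm1 z n = fst (fbf_state f G \<nu> x0 xm1 z n)"

definition fbf_y where
  "fbf_y f G \<nu> x0 xm1 z n =
     2 *\<^sub>R fst (fbf_state f G \<nu> x0 xm1 z n) - snd (fbf_state f G \<nu> x0 xm1 z n)"

definition gen_sigma :: "'w measure \<Rightarrow> (nat \<Rightarrow> 'w \<Rightarrow> 'b::topological_space) \<Rightarrow> nat \<Rightarrow> 'w measure" where
  "gen_sigma M \<xi> n = sigma (space M) {\<xi> i -` A \<inter> space M | i A. i < n \<and> A \<in> sets borel}"

end

theory Submission
  imports Defs
begin

lemma dir_deriv_lim:
  fixes g :: "'a::real_inner \<Rightarrow> real"
  assumes "(g has_derivative (\<lambda>v. inner d v)) (at z)"
  shows "((\<lambda>t. (g (z + t *\<^sub>R w) - g z) / t) \<longlongrightarrow> inner d w) (at_right 0)"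
proof -
  have "((\<lambda>t. z + t *\<^sub>R w) has_derivative (\<lambda>t. t *\<^sub>R w)) (at 0)"
    by (auto intro!: derivative_eq_intros)
  from has_derivative_compose[OF this, of g "\<lambda>v. inner d v"] assms
  have "((\<lambda>t. g (z + t *\<^sub>R w)) has_derivative (\<lambda>t. inner d (t *\<^sub>R w))) (at 0)" by simp
  then have "((\<lambda>t. g (z + t *\<^sub>R w)) has_field_derivative inner d w) (at 0)"
  proof -
    have eq: "(\<lambda>t. inner d (t *\<^sub>R w)) = (*) (inner d w)" by (auto simp: fun_eq_iff)
    show ?thesis using \<open>((\<lambda>t. g (z + t *\<^sub>R w)) has_derivative (\<lambda>t. inner d (t *\<^sub>R w))) (at 0)\<close>
      unfolding eq has_field_derivative_def .
  qed
  then have "((\<lambda>t. (g (z + t *\<^sub>R w) - g z) / t) \<longlongrightarrow> inner d w) (at 0)"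
    unfolding has_field_derivative_iff by simp
  then show ?thesis by (rule tendsto_mono[OF at_le, rotated]) simp
qed

lemma lim_lower:
  fixes q :: "real \<Rightarrow> real"
  assumes "(q \<longlongrightarrow> L) (at_right 0)" "\<And>t. 0 < t \<Longrightarrow> t < 1 \<Longrightarrow> c \<le> q t"
  shows "c \<le> L"
proof (rule tendsto_lowerbound[OF assms(1)])
  show "\<forall>\<^sub>F x in at_right 0. c \<le> q x"
    by (rule eventually_mono[OF eventually_at_right_real[of 0 1]]) (use assms(2) in auto)
qed simp

lemma lim_upper:
  fixes q :: "real \<Rightarrow> real"
  assumes "(q \<longlongrightarrow> L) (at_right 0)" "\<And>t. 0 < t \<Longrightarrow> t < 1 \<Longrightarrow> q t \<le> c"
  shows "L \<le> c"
proof (rule tendsto_upperbound[OF assms(1)])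
  show "\<forall>\<^sub>F x in at_right 0. q x \<le> c"
    by (rule eventually_mono[OF eventually_at_right_real[of 0 1]]) (use assms(2) in auto)
qed simp

lemma grad_ineq:
  fixes h :: "'a::real_inner \<Rightarrow> real"
  assumes cv: "convex_on UNIV h" and d: "(h has_derivative (\<lambda>v. inner (gh x) v)) (at x)"
  shows "h x + inner (gh x) (y - x) \<le> h y"
proof -
  have "inner (gh x) (y - x) \<le> h y - h x"
  proof (rule lim_upper[OF dir_deriv_lim[OF d]])
    fix t :: real assume t: "0 < t" "t < 1"
    have "h ((1 - t) *\<^sub>R x + t *\<^sub>R y) \<le> (1 - t) * h x + t * h y"
      using convex_onD[OF cv, of t x y] t by auto
    moreover have "(1 - t) *\<^sub>R x + t *\<^sub>R y = x + t *\<^sub>R (y - x)" by (simp add: algebra_simps)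
    ultimately have "h (x + t *\<^sub>R (y - x)) - h x \<le> t * (h y - h x)" by (simp add: algebra_simps)
    then show "(h (x + t *\<^sub>R (y - x)) - h x) / t \<le> h y - h x" using t by (simp add: divide_simps mult.commute)
  qed
  then show ?thesis by simp
qed

lemma grad_mono:
  fixes h :: "'a::real_inner \<Rightarrow> real"
  assumes cv: "convex_on UNIV h" and d: "\<And>x. (h has_derivative (\<lambda>v. inner (gh x) v)) (at x)"
  shows "0 \<le> inner (gh x - gh y) (x - y)"
proof -
  have 1: "h x + inner (gh x) (y - x) \<le> h y" by (rule grad_ineq[OF cv d])
  have 2: "h y + inner (gh y) (x - y) \<le> h x" by (rule grad_ineq[OF cv d])
  have "inner (gh x - gh y) (x - y) = - inner (gh x) (y - x) - inner (gh y) (x - y)"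
    by (simp add: inner_diff_left inner_diff_right)
  then show ?thesis using 1 2 by linarith
qed


lemma nsq_diff: "(norm (a - b))\<^sup>2 = (norm a)\<^sup>2 - 2 * inner a b + (norm (b::'a::real_inner))\<^sup>2"
  by (simp add: power2_norm_eq_inner inner_diff_left inner_diff_right inner_commute)
lemma nsq_add: "(norm (a + b))\<^sup>2 = (norm a)\<^sup>2 + 2 * inner a b + (norm (b::'a::real_inner))\<^sup>2"
  by (simp add: power2_norm_eq_inner inner_add_left inner_add_right inner_commute)
lemma nsq_scale: "(norm (t *\<^sub>R (a::'a::real_normed_vector)))\<^sup>2 = t\<^sup>2 * (norm a)\<^sup>2"
  by (simp add: power_mult_distrib)

locale fsetup =
  fixes f :: "'a::{real_inner, complete_space} \<Rightarrow> ereal" and \<nu> :: real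
  assumes fG: "f \<in> Gamma0" and nu_pos: "\<nu> > 0" and fsc: "strongly_convex \<nu> f"
    and sd_ne: "\<exists>x u. u \<in> subdiff f x"
begin

abbreviation F where "F x \<equiv> real_of_ereal (f x)"

lemma not_minf: "f x \<noteq> -\<infinity>"
  using fG by (auto simp: Gamma0_def proper_fun_def)

lemma fin_eq: "f x < \<infinity> \<Longrightarrow> f x = ereal (F x)"
  using not_minf[of x] by (cases "f x") auto

lemma fin_ex: "f x < \<infinity> \<Longrightarrow> \<exists>r. f x = ereal r"
  using not_minf[of x] by (cases "f x") auto

lemma cvx:
  assumes "f x < \<infinity>" "f y < \<infinity>" "0 \<le> t" "t \<le> 1"
  shows "f ((1 - t) *\<^sub>R x + t *\<^sub>R y) < \<infinity> \<and> F ((1 - t) *\<^sub>R x + t *\<^sub>R y) \<le> (1 - t) * F x + t * F y"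
proof -
  obtain a where a: "f x = ereal a" using fin_ex[OF assms(1)] by auto
  obtain b where b: "f y = ereal b" using fin_ex[OF assms(2)] by auto
  have c: "f ((1 - t) *\<^sub>R x + t *\<^sub>R y) \<le> ereal (1 - t) * f x + ereal t * f y"
    using fG assms(3,4) by (auto simp: Gamma0_def convex_fun_def)
  then have le: "f ((1 - t) *\<^sub>R x + t *\<^sub>R y) \<le> ereal ((1 - t) * a + t * b)" by (simp add: a b)
  then have fin: "f ((1 - t) *\<^sub>R x + t *\<^sub>R y) < \<infinity>" by (rule le_less_trans) simp
  obtain r where r: "f ((1 - t) *\<^sub>R x + t *\<^sub>R y) = ereal r" using fin_ex[OF fin] by auto
  show ?thesis using le fin by (simp add: r a b)
qed

lemma subdiff_real:
  assumes "u \<in> subdiff f x"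
  shows "f x < \<infinity>" "f y < \<infinity> \<Longrightarrow> F x + inner u (y - x) \<le> F y"
proof -
  show fx: "f x < \<infinity>" using assms by (auto simp: subdiff_def)
  assume fy: "f y < \<infinity>"
  obtain a where a: "f x = ereal a" using fin_ex[OF fx] by auto
  obtain b where b: "f y = ereal b" using fin_ex[OF fy] by auto
  have "f x + ereal (inner u (y - x)) \<le> f y" using assms by (auto simp: subdiff_def)
  then show "F x + inner u (y - x) \<le> F y" by (simp add: a b)
qed

lemma subdiff_intro:
  assumes "f x < \<infinity>" "\<And>y. f y < \<infinity> \<Longrightarrow> F x + inner u (y - x) \<le> F y"
  shows "u \<in> subdiff f x"
  unfolding subdiff_def
proof (intro CollectI conjI allI assms(1))
  fix y show "f x + ereal (inner u (y - x)) \<le> f y"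
  proof (cases "f y < \<infinity>")
    case True
    obtain a where a: "f x = ereal a" using fin_ex[OF assms(1)] by auto
    obtain b where b: "f y = ereal b" using fin_ex[OF True] by auto
    show ?thesis using assms(2)[OF True] by (simp add: a b)
  next
    case False then show ?thesis by (simp add: top.not_eq_extremum)
  qed
qed

lemma sd_mono:
  assumes "u \<in> subdiff f x" "v \<in> subdiff f y"
  shows "\<nu> * (norm (x - y))\<^sup>2 \<le> inner (x - y) (u - v)" "0 \<le> inner (x - y) (u - v)"
proof -
  show 1: "\<nu> * (norm (x - y))\<^sup>2 \<le> inner (x - y) (u - v)" using fsc assms by (auto simp: strongly_convex_def)
  have "0 \<le> \<nu> * (norm (x - y))\<^sup>2" using nu_pos by simp
  then show "0 \<le> inner (x - y) (u - v)" using 1 by linarith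
qed

definition ismin :: "real \<Rightarrow> 'a \<Rightarrow> 'a \<Rightarrow> bool" where
  "ismin \<gamma> z p \<longleftrightarrow> (\<forall>y. ereal \<gamma> * f p + ereal ((norm (z - p))\<^sup>2 / 2) \<le> ereal \<gamma> * f y + ereal ((norm (z - y))\<^sup>2 / 2))"

lemma ereal_times_inf: "\<gamma> > 0 \<Longrightarrow> ereal \<gamma> * \<infinity> = \<infinity>" by simp

lemma ismin_fin:
  assumes "ismin \<gamma> z p" "\<gamma> > 0"
  shows "f p < \<infinity>"
proof (rule ccontr)
  obtain x u where "u \<in> subdiff f x" using sd_ne by auto
  then have fx: "f x < \<infinity>" by (rule subdiff_real)
  assume "\<not> f p < \<infinity>" then have "f p = \<infinity>" by (simp add: top.not_eq_extremum)
  then have E1: "ereal \<gamma> * f p + ereal ((norm (z - p))\<^sup>2 / 2) = \<infinity>" using assms(2) by simp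
  obtain a where a: "f x = ereal a" using fin_ex[OF fx] by auto
  have E3: "ereal \<gamma> * f p + ereal ((norm (z - p))\<^sup>2 / 2) \<le> ereal \<gamma> * f x + ereal ((norm (z - x))\<^sup>2 / 2)"
    using assms(1) unfolding ismin_def by blast
  then have "\<infinity> \<le> ereal \<gamma> * f x + ereal ((norm (z - x))\<^sup>2 / 2)" unfolding E1 .
  then show False by (simp add: a)
qed

lemma ismin_real:
  assumes "ismin \<gamma> z p" "\<gamma> > 0" "f y < \<infinity>"
  shows "\<gamma> * F p + (norm (z - p))\<^sup>2 / 2 \<le> \<gamma> * F y + (norm (z - y))\<^sup>2 / 2"
proof -
  have "ereal \<gamma> * f p + ereal ((norm (z - p))\<^sup>2 / 2) \<le> ereal \<gamma> * f y + ereal ((norm (z - y))\<^sup>2 / 2)"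
    using assms(1) unfolding ismin_def by auto
  moreover obtain a where a: "f p = ereal a" using fin_ex[OF ismin_fin[OF assms(1,2)]] by auto
  moreover obtain b where b: "f y = ereal b" using fin_ex[OF assms(3)] by auto
  ultimately show ?thesis by simp
qed

lemma ismin_intro:
  assumes "\<gamma> > 0" "f p < \<infinity>" "\<And>y. f y < \<infinity> \<Longrightarrow> \<gamma> * F p + (norm (z - p))\<^sup>2 / 2 \<le> \<gamma> * F y + (norm (z - y))\<^sup>2 / 2"
  shows "ismin \<gamma> z p"
  unfolding ismin_def
proof
  fix y show "ereal \<gamma> * f p + ereal ((norm (z - p))\<^sup>2 / 2) \<le> ereal \<gamma> * f y + ereal ((norm (z - y))\<^sup>2 / 2)"
  proof (cases "f y < \<infinity>")
    case True
    obtain a where a: "f p = ereal a" using fin_ex[OF assms(2)] by auto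
    obtain b where b: "f y = ereal b" using fin_ex[OF True] by auto
    show ?thesis using assms(3)[OF True] by (simp add: a b)
  next
    case False then have "f y = \<infinity>" by (simp add: top.not_eq_extremum)
    then show ?thesis using assms(1) by simp
  qed
qed

lemma ismin_sd:
  assumes m: "ismin \<gamma> z p" and g: "\<gamma> > 0"
  shows "(1 / \<gamma>) *\<^sub>R (z - p) \<in> subdiff f p"
proof (rule subdiff_intro[OF ismin_fin[OF m g]])
  have fp: "f p < \<infinity>" by (rule ismin_fin[OF m g])
  fix y assume fy: "f y < \<infinity>"
  have "\<gamma> * F p + inner (z - p) (y - p) \<le> \<gamma> * F y"
  proof (rule lim_upper[where q = "\<lambda>t. \<gamma> * F p + inner (z - p) (y - p) - t / 2 * (norm (y - p))\<^sup>2"])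
    show "((\<lambda>t. \<gamma> * F p + inner (z - p) (y - p) - t / 2 * (norm (y - p))\<^sup>2) \<longlongrightarrow> \<gamma> * F p + inner (z - p) (y - p)) (at_right 0)"
      by (auto intro!: tendsto_eq_intros)
    fix t :: real assume t: "0 < t" "t < 1"
    let ?yt = "(1 - t) *\<^sub>R p + t *\<^sub>R y"
    from cvx[OF fp fy, of t] t have c: "f ?yt < \<infinity>" "F ?yt \<le> (1 - t) * F p + t * F y" by auto
    have 1: "\<gamma> * F p + (norm (z - p))\<^sup>2 / 2 \<le> \<gamma> * F ?yt + (norm (z - ?yt))\<^sup>2 / 2"
      by (rule ismin_real[OF m g c(1)])
    have e: "z - ?yt = (z - p) - t *\<^sub>R (y - p)" by (simp add: algebra_simps)
    have 2: "(norm (z - ?yt))\<^sup>2 = (norm (z - p))\<^sup>2 - 2 * t * inner (z - p) (y - p) + t\<^sup>2 * (norm (y - p))\<^sup>2"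
      unfolding e nsq_diff[of "z - p" "t *\<^sub>R (y - p)"] nsq_scale by simp
    have 3: "\<gamma> * F ?yt \<le> \<gamma> * ((1 - t) * F p + t * F y)" using c(2) g by simp
    from 1 2 3 have "t * (\<gamma> * F p + inner (z - p) (y - p) - t / 2 * (norm (y - p))\<^sup>2) \<le> t * (\<gamma> * F y)"
      by (simp add: algebra_simps power2_eq_square)
    then show "\<gamma> * F p + inner (z - p) (y - p) - t / 2 * (norm (y - p))\<^sup>2 \<le> \<gamma> * F y"
      using t by simp
  qed
  then have "(1 / \<gamma>) * (\<gamma> * F p + inner (z - p) (y - p)) \<le> (1 / \<gamma>) * (\<gamma> * F y)"
    using g by (intro mult_left_mono) auto
  moreover have "(1 / \<gamma>) * (\<gamma> * F p + inner (z - p) (y - p)) = F p + inner ((1 / \<gamma>) *\<^sub>R (z - p)) (y - p)"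
    using g unfolding inner_scaleR_left distrib_left by simp
  moreover have "(1 / \<gamma>) * (\<gamma> * F y) = F y" using g by simp
  ultimately show "F p + inner ((1 / \<gamma>) *\<^sub>R (z - p)) (y - p) \<le> F y"
    by simp
qed

lemma sd_ismin:
  assumes s: "(1 / \<gamma>) *\<^sub>R (z - p) \<in> subdiff f p" and g: "\<gamma> > 0"
  shows "ismin \<gamma> z p"
proof (rule ismin_intro[OF g subdiff_real(1)[OF s]])
  fix y assume fy: "f y < \<infinity>"
  have a: "F p + inner ((1 / \<gamma>) *\<^sub>R (z - p)) (y - p) \<le> F y" by (rule subdiff_real(2)[OF s fy])
  have "\<gamma> * (F p + inner ((1 / \<gamma>) *\<^sub>R (z - p)) (y - p)) \<le> \<gamma> * F y"
    using mult_left_mono[OF a, of \<gamma>] g by simp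
  then have "\<gamma> * F p + inner (z - p) (y - p) \<le> \<gamma> * F y"
    using g by (simp add: distrib_left)
  moreover have "z - y = (z - p) - (y - p)" by simp
  then have "(norm (z - y))\<^sup>2 = (norm (z - p))\<^sup>2 - 2 * inner (z - p) (y - p) + (norm (y - p))\<^sup>2"
    by (simp only: nsq_diff[of "z - p" "y - p"])
  moreover have "0 \<le> (norm (y - p))\<^sup>2" by simp
  ultimately show "\<gamma> * F p + (norm (z - p))\<^sup>2 / 2 \<le> \<gamma> * F y + (norm (z - y))\<^sup>2 / 2"
    by linarith
qed

lemma ismin_unique:
  assumes "ismin \<gamma> z p" "ismin \<gamma> z q" "\<gamma> > 0"
  shows "p = q"
proof -
  have "0 \<le> inner (p - q) ((1 / \<gamma>) *\<^sub>R (z - p) - (1 / \<gamma>) *\<^sub>R (z - q))"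
    by (rule sd_mono(2)[OF ismin_sd[OF assms(1,3)] ismin_sd[OF assms(2,3)]])
  also have "(1 / \<gamma>) *\<^sub>R (z - p) - (1 / \<gamma>) *\<^sub>R (z - q) = - (1 / \<gamma>) *\<^sub>R (p - q)"
    by (simp add: algebra_simps)
  also have "inner (p - q) (- (1 / \<gamma>) *\<^sub>R (p - q)) = - (1 / \<gamma>) * (norm (p - q))\<^sup>2"
    by (simp add: power2_norm_eq_inner)
  finally have a: "(norm (p - q))\<^sup>2 / \<gamma> \<le> 0" by simp
  have "0 \<le> (norm (p - q))\<^sup>2 / \<gamma>" using assms(3) by simp
  with a have "(norm (p - q))\<^sup>2 / \<gamma> = 0" by linarith
  then have "(norm (p - q))\<^sup>2 \<le> 0" using assms(3) by simp
  then show ?thesis by simp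
qed

end

lemma par_id: "(norm ((1/2) *\<^sub>R u + (1/2) *\<^sub>R v))\<^sup>2 = (norm u)\<^sup>2/2 + (norm v)\<^sup>2/2 - (norm (v - u))\<^sup>2/4"
  for u v :: "'a::real_inner"
  by (simp add: power2_norm_eq_inner inner_add_left inner_add_right inner_diff_left inner_diff_right inner_commute algebra_simps) (simp add: field_simps)

context fsetup begin

lemma ismin_exists:
  assumes g: "\<gamma> > 0"
  shows "\<exists>p. ismin \<gamma> z p"
proof -
  obtain xh uh where sd: "uh \<in> subdiff f xh" using sd_ne by auto
  define \<phi> where "\<phi> y = \<gamma> * F y + (norm (z - y))\<^sup>2 / 2" for y
  define D where "D = {y. f y < \<infinity>}"
  have xhD: "xh \<in> D" using subdiff_real(1)[OF sd] by (simp add: D_def)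
  define L where "L = \<gamma> * F xh - \<gamma> * norm uh * norm (z - xh) - (\<gamma> * norm uh)\<^sup>2 / 2"
  have lb: "L \<le> \<phi> y" if y: "y \<in> D" for y
  proof -
    have 1: "F xh + inner uh (y - xh) \<le> F y" using subdiff_real(2)[OF sd] y by (simp add: D_def)
    have 2: "- (norm uh * norm (y - xh)) \<le> inner uh (y - xh)"
      using Cauchy_Schwarz_ineq2[of uh "y - xh"] by linarith
    have 3: "norm (y - xh) \<le> norm (z - y) + norm (z - xh)"
      using norm_triangle_ineq4[of "z - xh" "z - y"] by (simp add: norm_minus_commute)
    have 4: "norm uh * norm (y - xh) \<le> norm uh * (norm (z - y) + norm (z - xh))"
      using 3 by (simp add: mult_left_mono)
    have 5: "\<gamma> * (F xh - norm uh * (norm (z - y) + norm (z - xh))) \<le> \<gamma> * F y"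
      using 1 2 4 g by (intro mult_left_mono) auto
    have 6: "0 \<le> (norm (z - y) - \<gamma> * norm uh)\<^sup>2 / 2" by simp
    show ?thesis using 5 6 unfolding L_def \<phi>_def by (simp add: power2_diff algebra_simps)
  qed
  define m where "m = Inf (\<phi> ` D)"
  have Dne: "\<phi> ` D \<noteq> {}" using xhD by auto
  have bdd: "bdd_below (\<phi> ` D)" using lb by (auto intro!: bdd_belowI)
  have m_le: "m \<le> \<phi> y" if "y \<in> D" for y
    unfolding m_def using that bdd by (intro cInf_lower) auto
  have "\<forall>k::nat. \<exists>a. a \<in> D \<and> \<phi> a < m + 1 / (real k + 1)"
  proof
    fix k :: nat
    have "Inf (\<phi> ` D) < m + 1 / (real k + 1)" unfolding m_def by (simp add: add_pos_pos)
    from cInf_lessD[OF Dne this] show "\<exists>a. a \<in> D \<and> \<phi> a < m + 1 / (real k + 1)" by auto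
  qed
  then obtain a where aD: "\<And>k. a k \<in> D" and aphi: "\<And>k. \<phi> (a k) < m + 1 / (real k + 1)"
    by metis
  have midineq: "(norm (b - c))\<^sup>2 \<le> 4 * (\<phi> b + \<phi> c - 2 * m)" if bc: "b \<in> D" "c \<in> D" for b c
  proof -
    let ?mid = "(1 - 1/2) *\<^sub>R b + (1/2) *\<^sub>R c"
    have fb: "f b < \<infinity>" and fc: "f c < \<infinity>" using bc by (auto simp: D_def)
    from cvx[OF fb fc, of "1/2"] have cm: "f ?mid < \<infinity>" "F ?mid \<le> (1 - 1/2) * F b + (1/2) * F c" by auto
    have mm: "m \<le> \<phi> ?mid" using cm(1) by (intro m_le) (simp add: D_def)
    have hz: "z = (1/2) *\<^sub>R z + (1/2) *\<^sub>R z" by (simp add: scaleR_add_left[symmetric])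
    have "z - ?mid = (1/2) *\<^sub>R (z - b) + (1/2) *\<^sub>R (z - c)"
      by (subst hz) (simp add: algebra_simps)
    then have nm: "(norm (z - ?mid))\<^sup>2 = (norm (z - b))\<^sup>2/2 + (norm (z - c))\<^sup>2/2 - (norm (b - c))\<^sup>2/4"
      using par_id[of "z - b" "z - c"] by (simp add: norm_minus_commute)
    have "\<gamma> * F ?mid \<le> \<gamma> * ((1 - 1/2) * F b + (1/2) * F c)" using cm(2) g by simp
    then show ?thesis using mm nm unfolding \<phi>_def by (simp add: algebra_simps)
  qed
  have cau: "Cauchy a"
    unfolding Cauchy_def
  proof (intro allI impI)
    fix e :: real assume e: "0 < e"
    obtain K :: nat where K: "inverse (real (Suc K)) < e\<^sup>2 / 8" using reals_Archimedean[of "e\<^sup>2/8"] e by auto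
    show "\<exists>M. \<forall>j\<ge>M. \<forall>k\<ge>M. dist (a j) (a k) < e"
    proof (intro exI allI impI)
      fix j k assume jk: "K \<le> j" "K \<le> k"
      have "(norm (a j - a k))\<^sup>2 \<le> 4 * (\<phi> (a j) + \<phi> (a k) - 2 * m)" by (rule midineq[OF aD aD])
      also have "\<dots> < 4 * (1 / (real j + 1) + 1 / (real k + 1))" using aphi[of j] aphi[of k] by simp
      also have "\<dots> \<le> 4 * (1 / (real K + 1) + 1 / (real K + 1))" using jk
        by (intro mult_left_mono add_mono divide_left_mono) auto
      also have "\<dots> = 8 * inverse (real (Suc K))" by (simp add: field_simps)
      also have "\<dots> < e\<^sup>2" using K by simp
      finally have "(norm (a j - a k))\<^sup>2 < e\<^sup>2" .
      then have "norm (a j - a k) < e" using e by (simp add: power_less_imp_less_base)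
      then show "dist (a j) (a k) < e" by (simp add: dist_norm)
    qed
  qed
  then obtain p where lim: "a \<longlonglongrightarrow> p" using Cauchy_convergent_iff convergent_def by blast
  have key: "f p < \<infinity> \<and> \<gamma> * F p + (norm (z - p))\<^sup>2 / 2 \<le> m + 2 * \<epsilon>" if ep: "\<epsilon> > 0" for \<epsilon>
  proof -
    define c where "c = (m + 2 * \<epsilon> - (norm (z - p))\<^sup>2 / 2) / \<gamma>"
    have t1: "(\<lambda>k. (norm (z - a k))\<^sup>2 / 2) \<longlonglongrightarrow> (norm (z - p))\<^sup>2 / 2"
      by (intro tendsto_intros lim) simp
    have ev1: "eventually (\<lambda>k. (norm (z - p))\<^sup>2 / 2 - \<epsilon> < (norm (z - a k))\<^sup>2 / 2) sequentially"
      using order_tendstoD(1)[OF t1, of "(norm (z - p))\<^sup>2 / 2 - \<epsilon>"] ep by simp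
    obtain K :: nat where K: "inverse (real (Suc K)) < \<epsilon>" using reals_Archimedean[OF ep] by auto
    have ev2: "eventually (\<lambda>k. 1 / (real k + 1) < \<epsilon>) sequentially"
      unfolding eventually_sequentially
    proof (intro exI allI impI)
      fix k assume "K \<le> k"
      then have "1 / (real k + 1) \<le> inverse (real (Suc K))" by (simp add: field_simps)
      then show "1 / (real k + 1) < \<epsilon>" using K by linarith
    qed
    have ev: "eventually (\<lambda>k. a k \<in> {x. f x \<le> ereal c}) sequentially"
      using ev1 ev2
    proof eventually_elim
      case (elim k)
      have "\<gamma> * F (a k) < m + 2 * \<epsilon> - (norm (z - p))\<^sup>2 / 2"
        using aphi[of k] elim unfolding \<phi>_def by linarith
      then have "F (a k) < c" unfolding c_def using g by (simp add: field_simps)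
      moreover obtain r where "f (a k) = ereal r" using aD[of k] fin_ex by (auto simp: D_def)
      ultimately show ?case by simp
    qed
    have cl: "closed {x. f x \<le> ereal c}" using fG by (auto simp: Gamma0_def lsc_fun_def)
    have "p \<in> {x. f x \<le> ereal c}" by (rule Lim_in_closed_set[OF cl ev _ lim]) simp
    then have fp: "f p \<le> ereal c" by simp
    then have fpi: "f p < \<infinity>" by (rule le_less_trans) simp
    obtain r where r: "f p = ereal r" using fin_ex[OF fpi] by auto
    have "F p \<le> c" using fp r by simp
    then have "\<gamma> * F p \<le> \<gamma> * c" using g by simp
    also have "\<gamma> * c = m + 2 * \<epsilon> - (norm (z - p))\<^sup>2 / 2" unfolding c_def using g by simp
    finally show ?thesis using fpi by simp
  qed
  have fp: "f p < \<infinity>" using key[of 1] by simp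
  have pm: "\<gamma> * F p + (norm (z - p))\<^sup>2 / 2 \<le> m"
  proof (rule ccontr)
    assume na: "\<not> ?thesis"
    then have "0 < (\<gamma> * F p + (norm (z - p))\<^sup>2 / 2 - m) / 4" by simp
    from key[OF this] have "\<gamma> * F p + (norm (z - p))\<^sup>2 / 2 \<le> m + 2 * ((\<gamma> * F p + (norm (z - p))\<^sup>2 / 2 - m) / 4)" by blast
    then show False using na by argo
  qed
  have "ismin \<gamma> z p"
  proof (rule ismin_intro[OF g fp])
    fix y assume "f y < \<infinity>"
    then have "m \<le> \<phi> y" by (intro m_le) (simp add: D_def)
    then show "\<gamma> * F p + (norm (z - p))\<^sup>2 / 2 \<le> \<gamma> * F y + (norm (z - y))\<^sup>2 / 2"
      using pm unfolding \<phi>_def by simp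
  qed
  then show ?thesis ..
qed

lemma prox_ismin:
  assumes g: "\<gamma> > 0"
  shows "ismin \<gamma> z (prox (\<lambda>u. ereal \<gamma> * f u) z)"
proof -
  obtain p where p: "ismin \<gamma> z p" using ismin_exists[OF g] by auto
  have "prox (\<lambda>u. ereal \<gamma> * f u) z = p"
    unfolding prox_def
  proof (rule the_equality)
    show "\<forall>y. ereal \<gamma> * f p + ereal ((norm (z - p))\<^sup>2 / 2) \<le> ereal \<gamma> * f y + ereal ((norm (z - y))\<^sup>2 / 2)"
      using p unfolding ismin_def .
    fix q assume "\<forall>y. ereal \<gamma> * f q + ereal ((norm (z - q))\<^sup>2 / 2) \<le> ereal \<gamma> * f y + ereal ((norm (z - y))\<^sup>2 / 2)"
    then have "ismin \<gamma> z q" unfolding ismin_def .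
    then show "q = p" using ismin_unique[OF _ p g] by blast
  qed
  then show ?thesis using p by simp
qed

lemma prox_sd:
  assumes g: "\<gamma> > 0"
  shows "(1 / \<gamma>) *\<^sub>R (z - prox (\<lambda>u. ereal \<gamma> * f u) z) \<in> subdiff f (prox (\<lambda>u. ereal \<gamma> * f u) z)"
  by (rule ismin_sd[OF prox_ismin[OF g] g])

lemma prox_eqI:
  assumes g: "\<gamma> > 0" and s: "(1 / \<gamma>) *\<^sub>R (z - p) \<in> subdiff f p"
  shows "prox (\<lambda>u. ereal \<gamma> * f u) z = p"
  using ismin_unique[OF prox_ismin[OF g] sd_ismin[OF s g] g] .

lemma prox_nonexp:
  assumes g: "\<gamma> > 0"
  shows "norm (prox (\<lambda>u. ereal \<gamma> * f u) z - prox (\<lambda>u. ereal \<gamma> * f u) z') \<le> norm (z - z')"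
proof -
  let ?p = "prox (\<lambda>u. ereal \<gamma> * f u) z" and ?q = "prox (\<lambda>u. ereal \<gamma> * f u) z'"
  have "0 \<le> inner (?p - ?q) ((1 / \<gamma>) *\<^sub>R (z - ?p) - (1 / \<gamma>) *\<^sub>R (z' - ?q))"
    by (rule sd_mono(2)[OF prox_sd[OF g] prox_sd[OF g]])
  also have "(1 / \<gamma>) *\<^sub>R (z - ?p) - (1 / \<gamma>) *\<^sub>R (z' - ?q) = (1 / \<gamma>) *\<^sub>R ((z - z') - (?p - ?q))"
    by (simp add: algebra_simps)
  also have "inner (?p - ?q) \<dots> = (1 / \<gamma>) * (inner (?p - ?q) (z - z') - (norm (?p - ?q))\<^sup>2)"
    by (simp add: inner_diff_right power2_norm_eq_inner)
  finally have "0 \<le> (inner (?p - ?q) (z - z') - (norm (?p - ?q))\<^sup>2) / \<gamma>" by simp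
  then have "(norm (?p - ?q))\<^sup>2 \<le> inner (?p - ?q) (z - z')" using g
    by (simp add: zero_le_divide_iff)
  also have "\<dots> \<le> norm (?p - ?q) * norm (z - z')" by (rule norm_cauchy_schwarz)
  finally have "norm (?p - ?q) * norm (?p - ?q) \<le> norm (?p - ?q) * norm (z - z')"
    by (simp add: power2_eq_square)
  then show ?thesis
    by (cases "norm (?p - ?q) = 0") (auto simp: mult_le_cancel_left)
qed

end

locale fhsetup = fsetup f \<nu> for f :: "'a::{real_inner, complete_space} \<Rightarrow> ereal" and \<nu> +
  fixes h :: "'a \<Rightarrow> real" and gh :: "'a \<Rightarrow> 'a" and \<mu> :: real and xb :: 'a
  assumes h_convex: "convex_on UNIV h"
    and h_grad: "\<And>x. (h has_derivative (\<lambda>v. inner (gh x) v)) (at x)"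
    and mu_pos: "\<mu> > 0"
    and gh_lip: "\<And>x y. norm (gh x - gh y) \<le> \<mu> * norm (x - y)"
    and xb_sd: "- gh xb \<in> subdiff f xb"
begin

lemma gh_mono: "0 \<le> inner (gh x - gh y) (x - y)"
  by (rule grad_mono[OF h_convex h_grad])

lemma xb_min: "f xb + ereal (h xb) \<le> f y + ereal (h y)"
proof (cases "f y < \<infinity>")
  case True
  have fx: "f xb < \<infinity>" by (rule subdiff_real(1)[OF xb_sd])
  obtain a where a: "f xb = ereal a" using fin_ex[OF fx] by auto
  obtain b where b: "f y = ereal b" using fin_ex[OF True] by auto
  have 1: "F xb + inner (- gh xb) (y - xb) \<le> F y" by (rule subdiff_real(2)[OF xb_sd True])
  have 2: "h xb + inner (gh xb) (y - xb) \<le> h y" by (rule grad_ineq[OF h_convex h_grad])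
  have "a + h xb \<le> b + h y" using 1 2 a b by (simp add: inner_minus_left)
  then show ?thesis by (simp add: a b)
next
  case False then show ?thesis by (simp add: top.not_eq_extremum)
qed

lemma min_sd:
  assumes mz: "\<forall>y. f z + ereal (h z) \<le> f y + ereal (h y)"
  shows "- gh z \<in> subdiff f z"
proof -
  have fx: "f xb < \<infinity>" by (rule subdiff_real(1)[OF xb_sd])
  have fz: "f z < \<infinity>"
  proof (rule ccontr)
    assume "\<not> f z < \<infinity>" then have "f z = \<infinity>" by (simp add: top.not_eq_extremum)
    with mz[rule_format, of xb] have "\<infinity> \<le> f xb + ereal (h xb)" by simp
    then show False using fx fin_ex[OF fx] by auto
  qed
  show ?thesis
  proof (rule subdiff_intro[OF fz])
    fix y assume fy: "f y < \<infinity>"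
    have "F z - F y \<le> inner (gh z) (y - z)"
    proof (rule lim_lower[OF dir_deriv_lim[OF h_grad]])
      fix t :: real assume t: "0 < t" "t < 1"
      let ?zt = "(1 - t) *\<^sub>R z + t *\<^sub>R y"
      from cvx[OF fz fy, of t] t have c: "f ?zt < \<infinity>" "F ?zt \<le> (1 - t) * F z + t * F y" by auto
      obtain a where a: "f z = ereal a" using fin_ex[OF fz] by auto
      obtain b where b: "f ?zt = ereal b" using fin_ex[OF c(1)] by auto
      have "f z + ereal (h z) \<le> f ?zt + ereal (h ?zt)" using mz by blast
      then have 1: "F z + h z \<le> F ?zt + h ?zt" by (simp add: a b)
      have e: "?zt = z + t *\<^sub>R (y - z)" by (simp add: algebra_simps)
      from 1 c(2) have "t * (F z - F y) \<le> h (z + t *\<^sub>R (y - z)) - h z" unfolding e[symmetric]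
        by (simp add: algebra_simps)
      then show "F z - F y \<le> (h (z + t *\<^sub>R (y - z)) - h z) / t" using t
        by (simp add: field_simps mult.commute)
    qed
    then show "F z + inner (- gh z) (y - z) \<le> F y" by (simp add: inner_minus_left)
  qed
qed

lemma min_unique:
  assumes mz: "\<forall>y. f z + ereal (h z) \<le> f y + ereal (h y)"
  shows "z = xb"
proof -
  have "\<nu> * (norm (z - xb))\<^sup>2 \<le> inner (z - xb) (- gh z - - gh xb)"
    by (rule sd_mono(1)[OF min_sd[OF mz] xb_sd])
  also have "\<dots> = - inner (gh z - gh xb) (z - xb)" by (simp add: inner_commute inner_diff_right inner_diff_left)
  also have "\<dots> \<le> 0" using gh_mono[of z xb] by simp
  finally have "(norm (z - xb))\<^sup>2 \<le> 0" using nu_pos by (simp add: mult_le_0_iff)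
  then show ?thesis by simp
qed

lemma step_ineq:
  fixes \<gamma> :: real and x xp e :: 'a
  assumes g: "\<gamma> > 0" and gn: "\<gamma> * \<nu> \<le> 1/2"
  defines "y \<equiv> 2 *\<^sub>R x - xp"
  defines "xplus \<equiv> prox (\<lambda>u. ereal \<gamma> * f u) (x - \<gamma> *\<^sub>R (gh y + e))"
  defines "xt \<equiv> prox (\<lambda>u. ereal \<gamma> * f u) (x - \<gamma> *\<^sub>R gh y)"
  shows "(1 + 2 * \<gamma> * \<nu> - 6 * \<gamma>\<^sup>2 * \<mu>\<^sup>2) * ((norm (xplus - xb))\<^sup>2 + (norm (xplus - x))\<^sup>2 / 4)
           + 2 * \<gamma> * inner (xt - xb) e
         \<le> (norm (x - xb))\<^sup>2 + (norm (x - xp))\<^sup>2 / 4 + 2 * \<gamma>\<^sup>2 * (norm e)\<^sup>2"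
proof -
  define z where "z = x - \<gamma> *\<^sub>R (gh y + e)"
  define a where "a = xplus - xb"
  define b where "b = x - xplus"
  define A where "A = norm a"
  define B where "B = norm b"
  define d where "d = norm (x - xp)"
  define E where "E = norm e"
  have sd1: "(1 / \<gamma>) *\<^sub>R (z - xplus) \<in> subdiff f xplus"
    unfolding xplus_def z_def by (rule prox_sd[OF g])
  have sm: "\<nu> * (norm (xplus - xb))\<^sup>2 \<le> inner (xplus - xb) ((1 / \<gamma>) *\<^sub>R (z - xplus) - - gh xb)"
    by (rule sd_mono(1)[OF sd1 xb_sd])
  have zx: "(1 / \<gamma>) *\<^sub>R (z - xplus) - - gh xb = (1 / \<gamma>) *\<^sub>R b - (gh y - gh xb) - e"
    unfolding z_def b_def using g by (simp add: algebra_simps)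
  have eq: "inner a ((1 / \<gamma>) *\<^sub>R b - (gh y - gh xb) - e) = (1 / \<gamma>) * inner a b - inner a (gh y - gh xb) - inner a e"
    by (simp add: inner_diff_right)
  have sm2': "\<nu> * A\<^sup>2 \<le> inner a ((1 / \<gamma>) *\<^sub>R b - (gh y - gh xb) - e)"
    using sm unfolding zx A_def a_def .
  have sm2: "\<nu> * A\<^sup>2 \<le> (1 / \<gamma>) * inner a b - inner a (gh y - gh xb) - inner a e"
    using sm2' eq by linarith
  then have sm3: "2 * \<gamma> * \<nu> * A\<^sup>2 \<le> 2 * inner a b - 2 * \<gamma> * inner a (gh y - gh xb) - 2 * \<gamma> * inner a e"
    using g mult_left_mono[OF sm2, of "2 * \<gamma>"] by (simp add: algebra_simps)
  have ab: "a + b = x - xb" unfolding a_def b_def by simp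
  have pab: "2 * inner a b = (norm (x - xb))\<^sup>2 - A\<^sup>2 - B\<^sup>2"
    unfolding ab[symmetric] A_def B_def nsq_add by simp
  have m1: "0 \<le> inner a (gh xplus - gh xb)"
    using gh_mono[of xplus xb] unfolding a_def by (simp add: inner_commute)
  have ydiff: "y - xplus = b + (x - xp)" unfolding y_def b_def by (simp add: algebra_simps scaleR_2)
  have nyx: "norm (y - xplus) \<le> B + d" unfolding ydiff B_def d_def by (rule norm_triangle_ineq)
  have l1: "norm (gh y - gh xplus) \<le> \<mu> * (B + d)"
    using gh_lip[of y xplus] nyx mu_pos by (smt (verit) mult_left_mono)
  have "- inner a (gh y - gh xplus) \<le> A * (\<mu> * (B + d))"
  proof -
    have "- inner a (gh y - gh xplus) \<le> A * norm (gh y - gh xplus)"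
      using Cauchy_Schwarz_ineq2[of a "gh y - gh xplus"] unfolding A_def by linarith
    also have "\<dots> \<le> A * (\<mu> * (B + d))" using l1 by (simp add: A_def mult_left_mono)
    finally show ?thesis .
  qed
  moreover have "inner a (gh y - gh xb) = inner a (gh xplus - gh xb) + inner a (gh y - gh xplus)"
    by (simp add: inner_diff_right)
  ultimately have t2: "- inner a (gh y - gh xb) \<le> A * (\<mu> * (B + d))" using m1 by linarith
  have nxt: "norm (xplus - xt) \<le> \<gamma> * E"
  proof -
    have "norm (xplus - xt) \<le> norm ((x - \<gamma> *\<^sub>R (gh y + e)) - (x - \<gamma> *\<^sub>R gh y))"
      unfolding xplus_def xt_def by (rule prox_nonexp[OF g])
    also have "(x - \<gamma> *\<^sub>R (gh y + e)) - (x - \<gamma> *\<^sub>R gh y) = - (\<gamma> *\<^sub>R e)" by (simp add: algebra_simps)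
    finally show ?thesis using g by (simp add: E_def)
  qed
  have t3: "- inner a e \<le> - inner (xt - xb) e + \<gamma> * E\<^sup>2"
  proof -
    have "a = (xt - xb) + (xplus - xt)" unfolding a_def by simp
    then have "inner a e = inner ((xt - xb) + (xplus - xt)) e" by simp
    then have "inner a e = inner (xt - xb) e + inner (xplus - xt) e" by (simp only: inner_add_left)
    moreover have "- inner (xplus - xt) e \<le> norm (xplus - xt) * E"
      using Cauchy_Schwarz_ineq2[of "xplus - xt" e] unfolding E_def by linarith
    moreover have "norm (xplus - xt) * E \<le> \<gamma> * E * E" using nxt by (simp add: E_def mult_right_mono)
    ultimately show ?thesis by (simp add: power2_eq_square)
  qed
  have y1: "2 * \<gamma> * \<mu> * A * B \<le> B\<^sup>2 / 2 + 2 * \<gamma>\<^sup>2 * \<mu>\<^sup>2 * A\<^sup>2"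
  proof -
    have "0 \<le> (B - 2 * \<gamma> * \<mu> * A)\<^sup>2 / 2" by simp
    then show ?thesis by (simp add: power2_eq_square algebra_simps)
  qed
  have y2: "2 * \<gamma> * \<mu> * A * d \<le> d\<^sup>2 / 4 + 4 * \<gamma>\<^sup>2 * \<mu>\<^sup>2 * A\<^sup>2"
  proof -
    have "0 \<le> (d / 2 - 2 * \<gamma> * \<mu> * A)\<^sup>2" by simp
    then show ?thesis by (simp add: power2_eq_square algebra_simps)
  qed
  have t2': "- 2 * \<gamma> * inner a (gh y - gh xb) \<le> 2 * \<gamma> * \<mu> * A * B + 2 * \<gamma> * \<mu> * A * d"
    using mult_left_mono[OF t2, of "2 * \<gamma>"] g by (simp add: algebra_simps)
  have t3': "- 2 * \<gamma> * inner a e \<le> - 2 * \<gamma> * inner (xt - xb) e + 2 * \<gamma>\<^sup>2 * E\<^sup>2"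
    using mult_left_mono[OF t3, of "2 * \<gamma>"] g by (simp add: algebra_simps power2_eq_square)
  define q where "q = 1 + 2 * \<gamma> * \<nu> - 6 * \<gamma>\<^sup>2 * \<mu>\<^sup>2"
  have main: "q * A\<^sup>2 + B\<^sup>2 / 2 + 2 * \<gamma> * inner (xt - xb) e \<le> (norm (x - xb))\<^sup>2 + d\<^sup>2 / 4 + 2 * \<gamma>\<^sup>2 * E\<^sup>2"
    using sm3 pab t2' t3' y1 y2 unfolding q_def by (simp add: algebra_simps)
  have qle: "q \<le> 2" unfolding q_def using gn by (simp add: algebra_simps) (smt (verit) zero_le_power2 mult_nonneg_nonneg)
  have "q * (B\<^sup>2 / 4) \<le> B\<^sup>2 / 2"
  proof -
    have "q * (B\<^sup>2 / 4) \<le> 2 * (B\<^sup>2 / 4)" using qle by (intro mult_right_mono) auto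
    then show ?thesis by simp
  qed
  moreover have "norm (xplus - x) = B" unfolding B_def b_def by (simp add: norm_minus_commute)
  ultimately show ?thesis using main unfolding q_def[symmetric] A_def a_def d_def E_def
    by (simp add: distrib_left)
qed

end

lemma ln_step: "m > 0 \<Longrightarrow> 1 / (m + 1) \<le> ln (m + 1) - ln (m::real)"
proof -
  assume m: "m > 0"
  have "ln (m / (m + 1)) \<le> m / (m + 1) - 1" using m by (intro ln_le_minus_one) auto
  also have "m / (m + 1) - 1 = - (1 / (m + 1))" using m by (simp add: field_simps)
  finally show ?thesis using m by (simp add: ln_div)
qed

lemma rate_lemma:
  fixes a :: "nat \<Rightarrow> real" and K e :: real
  assumes a0: "\<And>n. 0 \<le> a n" and K: "K > 0" and e: "0 \<le> e"
    and rec: "\<And>n. (1 + 1 / (real n + 1) - K / (real n + 1)\<^sup>2) * a (Suc n) \<le> a n + e / (real n + 1)\<^sup>2"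
  shows "\<exists>C. \<forall>n\<ge>1. a n \<le> C * ln (real n + 1) / (real n + 1)"
proof -
  define L where "L = 2 * K"
  obtain N :: nat where N: "2 * K \<le> real N" using real_arch_simple by blast
  define T where "T n = a n * (real n + 1 + L)" for n
  define \<rho> where "\<rho> = 2 * (1 + L)"
  have Lpos: "L > 0" using K by (simp add: L_def)
  have Tstep: "T (Suc n) \<le> T n + e * \<rho> * (ln (real n + 2) - ln (real n + 1))" if n: "N \<le> n" for n
  proof -
    define m where "m = real n + 1"
    have m1: "m \<ge> 1" by (simp add: m_def)
    have mK: "2 * K \<le> m" using N n by (simp add: m_def)
    define q where "q = 1 + 1 / m - K / m\<^sup>2"
    have r: "q * a (Suc n) \<le> a n + e / m\<^sup>2" using rec[of n] by (simp add: m_def q_def)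
    have qm: "q * m\<^sup>2 = m\<^sup>2 + m - K"
    proof -
      have "q * m\<^sup>2 = m\<^sup>2 + (1 / m) * m\<^sup>2 - (K / m\<^sup>2) * m\<^sup>2" unfolding q_def by (simp add: algebra_simps)
      also have "(1 / m) * m\<^sup>2 = m" using m1 by (simp add: power2_eq_square)
      also have "(K / m\<^sup>2) * m\<^sup>2 = K" using m1 by simp
      finally show ?thesis .
    qed
    have qpos: "q > 0"
    proof -
      have "m * 1 \<le> m * m" using m1 by (intro mult_left_mono) auto
      then have "m \<le> m\<^sup>2" by (simp add: power2_eq_square)
      then have "m\<^sup>2 + m - K > 0" using m1 mK K by linarith
      then have "q * m\<^sup>2 > 0" using qm by simp
      then show ?thesis using m1 by (simp add: zero_less_mult_iff)
    qed
    have key: "m + 1 + L \<le> q * (m + L)"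
    proof -
      have "(m + 1 + L) * m\<^sup>2 \<le> (m\<^sup>2 + m - K) * (m + L)"
      proof -
        have "0 \<le> K * (m - 2 * K)" using mK K by simp
        then show ?thesis unfolding L_def by (simp add: algebra_simps power2_eq_square)
      qed
      also have "\<dots> = (q * m\<^sup>2) * (m + L)" by (simp only: qm)
      also have "\<dots> = q * (m + L) * m\<^sup>2" by (simp add: algebra_simps)
      finally have "(m + 1 + L) * m\<^sup>2 \<le> q * (m + L) * m\<^sup>2" .
      moreover have "m\<^sup>2 > 0" using m1 by simp
      ultimately show ?thesis by (rule mult_right_le_imp_le)
    qed
    have "T (Suc n) = a (Suc n) * (m + 1 + L)" by (simp add: T_def m_def)
    also have "\<dots> \<le> a (Suc n) * (q * (m + L))" using key a0 by (intro mult_left_mono) auto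
    also have "\<dots> = (q * a (Suc n)) * (m + L)" by simp
    also have "\<dots> \<le> (a n + e / m\<^sup>2) * (m + L)" using r Lpos m1 by (intro mult_right_mono) auto
    also have "\<dots> = T n + e * ((m + L) / m\<^sup>2)" by (simp add: T_def m_def algebra_simps)
    also have "(m + L) / m\<^sup>2 \<le> \<rho> / (m + 1)"
    proof -
      have 1: "m + L \<le> (1 + L) * m" using m1 Lpos mult_left_mono[of 1 m L] by (simp add: algebra_simps)
      have 2: "m + 1 \<le> 2 * m" using m1 by simp
      have "(m + L) * (m + 1) \<le> ((1 + L) * m) * (2 * m)" using 1 2 m1 Lpos by (intro mult_mono) auto
      also have "\<dots> = \<rho> * m\<^sup>2" unfolding \<rho>_def by (simp add: power2_eq_square)
      finally have 3: "(m + L) * (m + 1) \<le> \<rho> * m\<^sup>2" .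
      have "(m + L) / m\<^sup>2 = ((m + L) * (m + 1)) / (m\<^sup>2 * (m + 1))" using m1 by simp
      also have "\<dots> \<le> (\<rho> * m\<^sup>2) / (m\<^sup>2 * (m + 1))" using 3 m1 by (intro divide_right_mono) auto
      also have "\<dots> = \<rho> / (m + 1)" using m1 by simp
      finally show ?thesis .
    qed
    then have "e * ((m + L) / m\<^sup>2) \<le> e * (\<rho> / (m + 1))" using e by (intro mult_left_mono)
    also have "\<rho> / (m + 1) \<le> \<rho> * (ln (m + 1) - ln m)"
    proof -
      have "\<rho> * (1 / (m + 1)) \<le> \<rho> * (ln (m + 1) - ln m)"
        using ln_step[of m] m1 Lpos by (intro mult_left_mono) (auto simp: \<rho>_def)
      then show ?thesis by simp
    qed
    then have "e * (\<rho> / (m + 1)) \<le> e * (\<rho> * (ln (m + 1) - ln m))" using e by (intro mult_left_mono)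
    finally show ?thesis by (simp add: m_def algebra_simps)
  qed
  have inv: "T n \<le> T N + e * \<rho> * (ln (real n + 1) - ln (real N + 1))" if "N \<le> n" for n
    using that
  proof (induction n rule: dec_induct)
    case base then show ?case by simp
  next
    case (step n)
    have "T (Suc n) \<le> T n + e * \<rho> * (ln (real n + 2) - ln (real n + 1))" by (rule Tstep[OF step(1)])
    also have "\<dots> \<le> T N + e * \<rho> * (ln (real n + 1) - ln (real N + 1)) + e * \<rho> * (ln (real n + 2) - ln (real n + 1))"
      using step(3) by simp
    finally show ?case by (simp add: algebra_simps)
  qed
  define S where "S = (\<Sum>k<N. a k)"
  have TN: "0 \<le> T N" using a0 Lpos by (simp add: T_def)
  have ln2: "ln 2 > (0::real)" by simp
  define C where "C = T N / ln 2 + e * \<rho> + S * real N / ln 2"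
  have S0: "0 \<le> S" unfolding S_def using a0 by (simp add: sum_nonneg)
  have eq0: "0 \<le> e * \<rho>" using e Lpos by (simp add: \<rho>_def)
  show ?thesis
  proof (intro exI allI impI)
    fix n :: nat assume n1: "1 \<le> n"
    have lnn: "ln 2 \<le> ln (real n + 1)" using n1 by simp
    have lnpos: "0 < ln (real n + 1)" using n1 by simp
    show "a n \<le> C * ln (real n + 1) / (real n + 1)"
    proof (cases "N \<le> n")
      case True
      have "a n * (real n + 1) \<le> T n" unfolding T_def using a0 Lpos by (intro mult_left_mono) auto
      also have "\<dots> \<le> T N + e * \<rho> * (ln (real n + 1) - ln (real N + 1))" by (rule inv[OF True])
      also have "\<dots> \<le> T N + e * \<rho> * ln (real n + 1)" using eq0 by (simp add: mult_left_mono)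
      also have "T N \<le> T N / ln 2 * ln (real n + 1)"
      proof -
        have "T N / ln 2 * ln 2 \<le> T N / ln 2 * ln (real n + 1)" using lnn TN ln2 by (intro mult_left_mono) auto
        then show ?thesis using ln2 by simp
      qed
      then have "T N + e * \<rho> * ln (real n + 1) \<le> T N / ln 2 * ln (real n + 1) + e * \<rho> * ln (real n + 1)" by simp
      also have "\<dots> \<le> C * ln (real n + 1)" unfolding C_def using S0 lnpos ln2
        by (simp add: distrib_right)
      finally show ?thesis by (simp add: field_simps)
    next
      case False
      have "a n \<le> S" unfolding S_def using False a0 by (intro member_le_sum) auto
      have "a n * (real n + 1) \<le> S * real N"
        using \<open>a n \<le> S\<close> False a0 S0 by (intro mult_mono) auto
      also have "S * real N \<le> S * real N / ln 2 * ln (real n + 1)"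
      proof -
        have "S * real N / ln 2 * ln 2 \<le> S * real N / ln 2 * ln (real n + 1)" using lnn S0 ln2 by (intro mult_left_mono) auto
        then show ?thesis using ln2 by simp
      qed
      also have "\<dots> \<le> C * ln (real n + 1)" unfolding C_def using TN eq0 lnpos ln2
        by (simp add: distrib_right)
      finally show ?thesis by (simp add: field_simps)
    qed
  qed
qed


lemma lip_cont:
  fixes g :: "'a::real_normed_vector \<Rightarrow> 'b::real_normed_vector"
  assumes "\<And>x y. norm (g x - g y) \<le> C * norm (x - y)" "C \<ge> 0"
  shows "continuous_on UNIV g"
  by (rule lipschitz_on_continuous_on[of C]) (use assms in \<open>auto simp: lipschitz_on_def dist_norm\<close>)

locale stoch = fhsetup f \<nu> h gh \<mu> xb + prob_space M
  for f :: "'a::{real_inner, complete_space, second_countable_topology} \<Rightarrow> ereal" and \<nu> h gh \<mu> xb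
    and M :: "'w measure" +
  fixes GH :: "'a \<Rightarrow> real^'m \<Rightarrow> 'a" and \<xi> :: "nat \<Rightarrow> 'w \<Rightarrow> real^'m" and x0 xm1 :: 'a and c :: real
  assumes xi_rv: "\<And>n. \<xi> n \<in> borel_measurable M"
    and xi_indep: "indep_vars (\<lambda>_. borel) \<xi> UNIV"
    and xi_ident: "\<And>n. distr M borel (\<xi> n) = distr M borel (\<xi> 0)"
    and GH_meas: "(\<lambda>(x, z). GH x z) \<in> borel_measurable (borel \<Otimes>\<^sub>M borel)"
    and GH_unbiased: "\<And>x. integrable M (\<lambda>\<omega>. GH x (\<xi> 0 \<omega>)) \<and> (\<integral>\<omega>. GH x (\<xi> 0 \<omega>) \<partial>M) = gh x"
    and var_bound: "\<And>n. AE \<omega> in M.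
          nn_cond_exp M (gen_sigma M \<xi> n)
            (\<lambda>\<omega>'. ennreal ((norm (GH (fbf_y f GH \<nu> x0 xm1 (\<lambda>k. \<xi> k \<omega>') n) (\<xi> n \<omega>')
                                 - gh (fbf_y f GH \<nu> x0 xm1 (\<lambda>k. \<xi> k \<omega>') n)))\<^sup>2)) \<omega>
          \<le> ennreal c"
begin

definition "st n w = fbf_state f GH \<nu> x0 xm1 w n"
definition "gam n = step \<nu> n"
definition "Pn n = prox (\<lambda>u. ereal (gam n) * f u)"
definition "Xw n w = fst (st n w)"
definition "Pw n w = snd (st n w)"
definition "Yw n w = 2 *\<^sub>R Xw n w - Pw n w"

lemma gam_pos: "gam n > 0"
  using nu_pos by (simp add: gam_def step_def)

lemma st_Suc: "st (Suc n) w = (Pn n (Xw n w - gam n *\<^sub>R GH (Yw n w) (w n)), Xw n w)"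
  by (simp add: st_def Pn_def Xw_def Pw_def Yw_def gam_def Let_def)

lemma Xw_Suc: "Xw (Suc n) w = Pn n (Xw n w - gam n *\<^sub>R GH (Yw n w) (w n))"
  and Pw_Suc: "Pw (Suc n) w = Xw n w"
  by (simp_all add: Xw_def Pw_def st_Suc[unfolded Xw_def])

lemma Xw0: "Xw 0 w = x0" and Pw0: "Pw 0 w = xm1"
  by (simp_all add: Xw_def Pw_def st_def)

lemma st_local: "(\<And>k. k < n \<Longrightarrow> w k = w' k) \<Longrightarrow> st n w = st n w'"
proof (induction n)
  case 0 then show ?case by (simp add: st_def)
next
  case (Suc n)
  then have "st n w = st n w'" by auto
  moreover have "w n = w' n" using Suc by auto
  ultimately show ?case by (simp add: st_Suc Xw_def Pw_def Yw_def)
qed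

lemma Pn_nonexp: "norm (Pn n u - Pn n v) \<le> norm (u - v)"
  unfolding Pn_def by (rule prox_nonexp[OF gam_pos])

lemma Pn_cont: "continuous_on UNIV (Pn n)"
  by (rule lip_cont[of _ 1]) (use Pn_nonexp in auto)

lemma gh_cont: "continuous_on UNIV gh"
  by (rule lip_cont[of _ \<mu>]) (use gh_lip mu_pos in auto)

lemma Pn_xb: "Pn n (xb - gam n *\<^sub>R gh xb) = xb"
  unfolding Pn_def
proof (rule prox_eqI[OF gam_pos])
  have "(1 / gam n) *\<^sub>R (xb - gam n *\<^sub>R gh xb - xb) = - gh xb" using gam_pos[of n] by simp
  then show "(1 / gam n) *\<^sub>R (xb - gam n *\<^sub>R gh xb - xb) \<in> subdiff f xb" using xb_sd by simp
qed

lemma GH_meas2: "(\<lambda>p. GH (fst p) (snd p)) \<in> borel_measurable (borel \<Otimes>\<^sub>M borel)"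
  using GH_meas by (simp add: case_prod_beta')

lemma GH_comp_meas:
  assumes "a \<in> borel_measurable N" "b \<in> borel_measurable N"
  shows "(\<lambda>x. GH (a x) (b x)) \<in> borel_measurable N"
  using measurable_comp[OF measurable_Pair[OF assms] GH_meas2] by (simp add: comp_def)

lemma st_meas:
  assumes "n \<le> N"
  shows "Xw n \<in> borel_measurable (PiM {..<N} (\<lambda>_. borel)) \<and> Pw n \<in> borel_measurable (PiM {..<N} (\<lambda>_. borel))"
  using assms
proof (induction n)
  case 0 then show ?case by (simp add: Xw0[abs_def] Pw0[abs_def])
next
  case (Suc n)
  then have IH: "Xw n \<in> borel_measurable (PiM {..<N} (\<lambda>_. borel))" "Pw n \<in> borel_measurable (PiM {..<N} (\<lambda>_. borel))"
    by auto
  have Y: "Yw n \<in> borel_measurable (PiM {..<N} (\<lambda>_. borel))"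
    unfolding Yw_def[abs_def] using IH by measurable
  have comp: "(\<lambda>w. w n) \<in> measurable (PiM {..<N} (\<lambda>_. borel)) (borel :: (real^'m) measure)"
    using Suc.prems by (intro measurable_component_singleton) auto
  have G: "(\<lambda>w. GH (Yw n w) (w n)) \<in> borel_measurable (PiM {..<N} (\<lambda>_. borel))"
    by (rule GH_comp_meas[OF Y comp])
  have arg: "(\<lambda>w. Xw n w - gam n *\<^sub>R GH (Yw n w) (w n)) \<in> borel_measurable (PiM {..<N} (\<lambda>_. borel))"
    using IH(1) G by measurable
  have "(\<lambda>w. Pn n (Xw n w - gam n *\<^sub>R GH (Yw n w) (w n))) \<in> borel_measurable (PiM {..<N} (\<lambda>_. borel))"
    by (rule borel_measurable_continuous_on[OF Pn_cont arg])
  then show ?case using IH(1) by (simp add: Xw_Suc[abs_def] Pw_Suc[abs_def])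
qed

definition "Wr n \<omega> = (\<lambda>i\<in>{..<n}. \<xi> i \<omega>)"
definition "X n \<omega> = Xw n (\<lambda>k. \<xi> k \<omega>)"
definition "P n \<omega> = Pw n (\<lambda>k. \<xi> k \<omega>)"
definition "Y n \<omega> = Yw n (\<lambda>k. \<xi> k \<omega>)"
definition "eps n \<omega> = GH (Y n \<omega>) (\<xi> n \<omega>) - gh (Y n \<omega>)"
definition "Ztw n w = Pn n (Xw n w - gam n *\<^sub>R gh (Yw n w))"
definition "Zt n \<omega> = Ztw n (\<lambda>k. \<xi> k \<omega>)"

lemma Wr_meas: "Wr n \<in> measurable M (PiM {..<n} (\<lambda>_. borel))"
  unfolding Wr_def[abs_def] using xi_rv by (intro measurable_restrict) auto

lemma st_Wr: "st n (Wr n \<omega>) = st n (\<lambda>k. \<xi> k \<omega>)"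
  by (rule st_local) (simp add: Wr_def)

lemma X_Wr: "X n \<omega> = Xw n (Wr n \<omega>)" and P_Wr: "P n \<omega> = Pw n (Wr n \<omega>)"
  and Y_Wr: "Y n \<omega> = Yw n (Wr n \<omega>)" and Zt_Wr: "Zt n \<omega> = Ztw n (Wr n \<omega>)"
  by (simp_all add: X_def P_def Y_def Yw_def Xw_def Pw_def Zt_def Ztw_def st_Wr)

lemma X_meas: "X n \<in> borel_measurable M" and P_meas: "P n \<in> borel_measurable M"
  and Y_meas: "Y n \<in> borel_measurable M"
proof -
  have 1: "X n = (\<lambda>\<omega>. Xw n (Wr n \<omega>))" "P n = (\<lambda>\<omega>. Pw n (Wr n \<omega>))" "Y n = (\<lambda>\<omega>. Yw n (Wr n \<omega>))"
    by (simp_all add: X_Wr[abs_def] P_Wr[abs_def] Y_Wr[abs_def])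
  have a: "Xw n \<in> borel_measurable (PiM {..<n} (\<lambda>_. borel))" "Pw n \<in> borel_measurable (PiM {..<n} (\<lambda>_. borel))"
    using st_meas[of n n] by auto
  then have b: "Yw n \<in> borel_measurable (PiM {..<n} (\<lambda>_. borel))" unfolding Yw_def[abs_def] by measurable
  show "X n \<in> borel_measurable M" unfolding 1 using measurable_comp[OF Wr_meas a(1)] by (simp add: comp_def)
  show "P n \<in> borel_measurable M" unfolding 1 using measurable_comp[OF Wr_meas a(2)] by (simp add: comp_def)
  show "Y n \<in> borel_measurable M" unfolding 1 using measurable_comp[OF Wr_meas b] by (simp add: comp_def)
qed

lemma eps_meas: "eps n \<in> borel_measurable M"
  unfolding eps_def[abs_def]
  using GH_comp_meas[OF Y_meas xi_rv] borel_measurable_continuous_on[OF gh_cont Y_meas] by measurable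

lemma X_Suc: "X (Suc n) \<omega> = Pn n (X n \<omega> - gam n *\<^sub>R (gh (Y n \<omega>) + eps n \<omega>))"
  and P_Suc: "P (Suc n) \<omega> = X n \<omega>"
  by (simp_all add: X_def P_def Y_def eps_def Xw_Suc Pw_Suc)

lemma X0: "X 0 \<omega> = x0" and P0: "P 0 \<omega> = xm1"
  by (simp_all add: X_def P_def Xw0 Pw0)

end

lemma sq3: "(a + b + cc)\<^sup>2 \<le> 3 * (a\<^sup>2 + b\<^sup>2 + cc\<^sup>2)" for a b cc :: real
proof -
  have "0 \<le> (a - b)\<^sup>2 + (b - cc)\<^sup>2 + (a - cc)\<^sup>2" by simp
  then show ?thesis by (simp add: power2_eq_square algebra_simps)
qed

lemma sq_bound:
  fixes u a b cc :: real
  assumes "0 \<le> u" "u \<le> a + b + cc" "0 \<le> a" "0 \<le> b" "0 \<le> cc"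
  shows "u\<^sup>2 \<le> 3 * (a\<^sup>2 + b\<^sup>2 + cc\<^sup>2)"
proof -
  have "u\<^sup>2 \<le> (a + b + cc)\<^sup>2" using power_mono[OF assms(2) assms(1)] .
  then show ?thesis using sq3[of a b cc] by linarith
qed


context stoch begin

lemma gen_subalg: "subalgebra M (gen_sigma M \<xi> n)"
proof -
  let ?G = "{\<xi> i -` A \<inter> space M | i A. i < n \<and> A \<in> sets borel}"
  have G: "?G \<subseteq> Pow (space M)" by auto
  have G2: "?G \<subseteq> sets M" using xi_rv by (auto intro!: measurable_sets)
  show ?thesis unfolding subalgebra_def gen_sigma_def
    by (simp add: space_measure_of_conv sets_measure_of[OF G] sets.sigma_sets_subset[OF G2])
qed

lemma eps_sq:
  shows "integrable M (\<lambda>\<omega>. (norm (eps n \<omega>))\<^sup>2)" "(\<integral>\<omega>. (norm (eps n \<omega>))\<^sup>2 \<partial>M) \<le> max c 0"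
proof -
  interpret S: finite_measure_subalgebra M "gen_sigma M \<xi> n"
    by unfold_locales (rule gen_subalg)
  let ?g = "\<lambda>\<omega>. ennreal ((norm (eps n \<omega>))\<^sup>2)"
  have geq: "(\<lambda>\<omega>'. ennreal ((norm (GH (fbf_y f GH \<nu> x0 xm1 (\<lambda>k. \<xi> k \<omega>') n) (\<xi> n \<omega>')
                                 - gh (fbf_y f GH \<nu> x0 xm1 (\<lambda>k. \<xi> k \<omega>') n)))\<^sup>2)) = ?g"
    by (simp add: fbf_y_def eps_def Y_def Yw_def Xw_def Pw_def st_def)
  have gm: "?g \<in> borel_measurable M" using eps_meas by measurable
  have "(\<integral>\<^sup>+ \<omega>. ?g \<omega> \<partial>M) = (\<integral>\<^sup>+ \<omega>. 1 * ?g \<omega> \<partial>M)" by simp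
  also have "\<dots> = (\<integral>\<^sup>+ \<omega>. 1 * nn_cond_exp M (gen_sigma M \<xi> n) ?g \<omega> \<partial>M)"
    by (rule S.nn_cond_exp_intg[symmetric]) (auto simp: gm)
  also have "\<dots> \<le> (\<integral>\<^sup>+ \<omega>. ennreal c \<partial>M)"
    using var_bound[of n] unfolding geq by (intro nn_integral_mono_AE) auto
  also have "\<dots> = ennreal c" by (simp add: emeasure_space_1)
  finally have nn: "(\<integral>\<^sup>+ \<omega>. ?g \<omega> \<partial>M) \<le> ennreal c" .
  show int: "integrable M (\<lambda>\<omega>. (norm (eps n \<omega>))\<^sup>2)"
  proof (rule integrableI_bounded)
    show "(\<lambda>\<omega>. (norm (eps n \<omega>))\<^sup>2) \<in> borel_measurable M" using eps_meas by measurable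
    have "(\<integral>\<^sup>+ \<omega>. ennreal (norm ((norm (eps n \<omega>))\<^sup>2)) \<partial>M) = (\<integral>\<^sup>+ \<omega>. ?g \<omega> \<partial>M)" by simp
    also have "\<dots> < \<infinity>" using nn by (simp add: le_less_trans)
    finally show "(\<integral>\<^sup>+ \<omega>. ennreal (norm ((norm (eps n \<omega>))\<^sup>2)) \<partial>M) < \<infinity>" .
  qed
  have "ennreal (\<integral>\<omega>. (norm (eps n \<omega>))\<^sup>2 \<partial>M) = (\<integral>\<^sup>+ \<omega>. ?g \<omega> \<partial>M)"
    by (rule nn_integral_eq_integral[OF int, symmetric]) auto
  also have "\<dots> \<le> ennreal (max 0 c)" using nn by (simp only: ennreal_max_0)
  finally have "ennreal (\<integral>\<omega>. (norm (eps n \<omega>))\<^sup>2 \<partial>M) \<le> ennreal (max 0 c)" .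
  then show "(\<integral>\<omega>. (norm (eps n \<omega>))\<^sup>2 \<partial>M) \<le> max c 0"
    by (subst (asm) ennreal_le_iff) (auto simp: max.commute)
qed

lemma step_bound:
  "norm (Pn n (x - gam n *\<^sub>R (gh (2 *\<^sub>R x - xp) + e)) - xb)
     \<le> (1 + 2 * gam n * \<mu>) * norm (x - xb) + gam n * \<mu> * norm (xp - xb) + gam n * norm e"
proof -
  let ?g = "gam n" and ?y = "2 *\<^sub>R x - xp"
  have "norm (Pn n (x - ?g *\<^sub>R (gh ?y + e)) - xb) = norm (Pn n (x - ?g *\<^sub>R (gh ?y + e)) - Pn n (xb - ?g *\<^sub>R gh xb))"
    by (simp add: Pn_xb)
  also have "\<dots> \<le> norm ((x - ?g *\<^sub>R (gh ?y + e)) - (xb - ?g *\<^sub>R gh xb))" by (rule Pn_nonexp)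
  also have "(x - ?g *\<^sub>R (gh ?y + e)) - (xb - ?g *\<^sub>R gh xb) = (x - xb) - ?g *\<^sub>R (gh ?y - gh xb) - ?g *\<^sub>R e"
    by (simp add: algebra_simps)
  also have "norm \<dots> \<le> norm (x - xb) + ?g * norm (gh ?y - gh xb) + ?g * norm e"
    using gam_pos[of n] by (smt (verit) norm_scaleR norm_triangle_ineq4 norm_triangle_ineq abs_of_pos)
  also have "?g * norm (gh ?y - gh xb) \<le> ?g * (\<mu> * norm (?y - xb))"
    using gh_lip gam_pos[of n] by (intro mult_left_mono) auto
  also have "norm (?y - xb) \<le> 2 * norm (x - xb) + norm (xp - xb)"
  proof -
    have "?y - xb = 2 *\<^sub>R (x - xb) - (xp - xb)" by (simp add: algebra_simps scaleR_2)
    then show ?thesis by (metis norm_scaleR abs_numeral norm_triangle_ineq4 order_trans add_mono order_refl)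
  qed
  then have "?g * (\<mu> * norm (?y - xb)) \<le> ?g * (\<mu> * (2 * norm (x - xb) + norm (xp - xb)))"
    using gam_pos[of n] mu_pos by (intro mult_left_mono) auto
  finally show ?thesis by (simp add: algebra_simps)
qed

lemma moments:
  "integrable M (\<lambda>\<omega>. (norm (X n \<omega> - xb))\<^sup>2) \<and> integrable M (\<lambda>\<omega>. (norm (P n \<omega> - xb))\<^sup>2)"
proof (induction n)
  case 0 then show ?case by (simp add: X0 P0)
next
  case (Suc n)
  let ?a = "1 + 2 * gam n * \<mu>" and ?b = "gam n * \<mu>" and ?c = "gam n"
  have pos: "0 \<le> ?a" "0 \<le> ?b" "0 \<le> ?c" using gam_pos[of n] mu_pos by auto
  have bnd: "(norm (X (Suc n) \<omega> - xb))\<^sup>2 \<le> 3 * ((?a * norm (X n \<omega> - xb))\<^sup>2 + (?b * norm (P n \<omega> - xb))\<^sup>2 + (?c * norm (eps n \<omega>))\<^sup>2)" for \<omega>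
  proof (rule sq_bound)
    have "Y n \<omega> = 2 *\<^sub>R X n \<omega> - P n \<omega>" by (simp add: Y_def X_def P_def Yw_def)
    then show "norm (X (Suc n) \<omega> - xb) \<le> ?a * norm (X n \<omega> - xb) + ?b * norm (P n \<omega> - xb) + ?c * norm (eps n \<omega>)"
      unfolding X_Suc using step_bound by (simp add: mult.assoc)
  qed (use pos in auto)
  have i: "integrable M (\<lambda>\<omega>. 3 * ((?a * norm (X n \<omega> - xb))\<^sup>2 + (?b * norm (P n \<omega> - xb))\<^sup>2 + (?c * norm (eps n \<omega>))\<^sup>2))"
    using Suc.IH eps_sq(1)[of n] by (simp add: power_mult_distrib)
  have "integrable M (\<lambda>\<omega>. (norm (X (Suc n) \<omega> - xb))\<^sup>2)"
  proof (rule Bochner_Integration.integrable_bound[OF i])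
    show "(\<lambda>\<omega>. (norm (X (Suc n) \<omega> - xb))\<^sup>2) \<in> borel_measurable M" using X_meas by measurable
    show "AE \<omega> in M. norm ((norm (X (Suc n) \<omega> - xb))\<^sup>2) \<le> norm (3 * ((?a * norm (X n \<omega> - xb))\<^sup>2 + (?b * norm (P n \<omega> - xb))\<^sup>2 + (?c * norm (eps n \<omega>))\<^sup>2))"
      using bnd by (auto simp: abs_of_nonneg)
  qed
  then show ?case using Suc.IH by (simp add: P_Suc)
qed

end

context stoch begin

lemma Ztw_meas: "Ztw n \<in> borel_measurable (PiM {..<n} (\<lambda>_. borel))"
proof -
  have a: "Xw n \<in> borel_measurable (PiM {..<n} (\<lambda>_. borel))" "Pw n \<in> borel_measurable (PiM {..<n} (\<lambda>_. borel))"
    using st_meas[of n n] by auto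
  then have b: "Yw n \<in> borel_measurable (PiM {..<n} (\<lambda>_. borel))" unfolding Yw_def[abs_def] by measurable
  have c: "(\<lambda>w. gh (Yw n w)) \<in> borel_measurable (PiM {..<n} (\<lambda>_. borel))"
    by (rule borel_measurable_continuous_on[OF gh_cont b])
  have "(\<lambda>w. Xw n w - gam n *\<^sub>R gh (Yw n w)) \<in> borel_measurable (PiM {..<n} (\<lambda>_. borel))"
    using a(1) c by measurable
  from borel_measurable_continuous_on[OF Pn_cont this] show ?thesis by (simp add: Ztw_def[abs_def])
qed

lemma Yw_meas: "Yw n \<in> borel_measurable (PiM {..<n} (\<lambda>_. borel))"
proof -
  have a: "Xw n \<in> borel_measurable (PiM {..<n} (\<lambda>_. borel))" "Pw n \<in> borel_measurable (PiM {..<n} (\<lambda>_. borel))"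
    using st_meas[of n n] by auto
  then show ?thesis unfolding Yw_def[abs_def] by measurable
qed

lemma Zt_meas: "Zt n \<in> borel_measurable M"
proof -
  have "Zt n = (\<lambda>\<omega>. Ztw n (Wr n \<omega>))" by (simp add: Zt_Wr[abs_def])
  then show ?thesis using measurable_comp[OF Wr_meas Ztw_meas] by (simp add: comp_def)
qed

lemma Zt_alt: "Zt n \<omega> = Pn n (X n \<omega> - gam n *\<^sub>R (gh (2 *\<^sub>R X n \<omega> - P n \<omega>) + 0))"
  by (simp add: Zt_def Ztw_def X_def P_def Yw_def)

lemma inner_int: "integrable M (\<lambda>\<omega>. inner (Zt n \<omega> - xb) (eps n \<omega>))"
proof -
  let ?a = "1 + 2 * gam n * \<mu>" and ?b = "gam n * \<mu>"
  have pos: "0 \<le> ?a" "0 \<le> ?b" using gam_pos[of n] mu_pos by auto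
  have zb0: "(norm (Zt n \<omega> - xb))\<^sup>2 \<le> 3 * ((?a * norm (X n \<omega> - xb))\<^sup>2 + (?b * norm (P n \<omega> - xb))\<^sup>2 + (gam n * norm (0::'a))\<^sup>2)" for \<omega>
  proof (rule sq_bound)
    show "norm (Zt n \<omega> - xb) \<le> ?a * norm (X n \<omega> - xb) + ?b * norm (P n \<omega> - xb) + gam n * norm (0::'a)"
      unfolding Zt_alt using step_bound[of n "X n \<omega>" "P n \<omega>" 0] by (simp add: mult.assoc)
  qed (use pos gam_pos[of n] in auto)
  have zb: "(norm (Zt n \<omega> - xb))\<^sup>2 \<le> 3 * ((?a * norm (X n \<omega> - xb))\<^sup>2 + (?b * norm (P n \<omega> - xb))\<^sup>2)" for \<omega>
    using zb0[of \<omega>] by simp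
  have ib: "\<bar>inner (Zt n \<omega> - xb) (eps n \<omega>)\<bar> \<le> (3 * ((?a * norm (X n \<omega> - xb))\<^sup>2 + (?b * norm (P n \<omega> - xb))\<^sup>2)) / 2 + (norm (eps n \<omega>))\<^sup>2 / 2" for \<omega>
  proof -
    have "\<bar>inner (Zt n \<omega> - xb) (eps n \<omega>)\<bar> \<le> norm (Zt n \<omega> - xb) * norm (eps n \<omega>)" by (rule Cauchy_Schwarz_ineq2)
    also have "\<dots> \<le> (norm (Zt n \<omega> - xb))\<^sup>2 / 2 + (norm (eps n \<omega>))\<^sup>2 / 2"
    proof -
      have "0 \<le> (norm (Zt n \<omega> - xb) - norm (eps n \<omega>))\<^sup>2" by simp
      then show ?thesis by (simp add: power2_diff)
    qed
    finally show ?thesis using zb[of \<omega>] by linarith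
  qed
  have i: "integrable M (\<lambda>\<omega>. (3 * ((?a * norm (X n \<omega> - xb))\<^sup>2 + (?b * norm (P n \<omega> - xb))\<^sup>2)) / 2 + (norm (eps n \<omega>))\<^sup>2 / 2)"
    using moments[of n] eps_sq(1)[of n] by (simp add: power_mult_distrib)
  show ?thesis
  proof (rule Bochner_Integration.integrable_bound[OF i])
    show "(\<lambda>\<omega>. inner (Zt n \<omega> - xb) (eps n \<omega>)) \<in> borel_measurable M" using Zt_meas eps_meas by measurable
    show "AE \<omega> in M. norm (inner (Zt n \<omega> - xb) (eps n \<omega>)) \<le> norm ((3 * ((?a * norm (X n \<omega> - xb))\<^sup>2 + (?b * norm (P n \<omega> - xb))\<^sup>2)) / 2 + (norm (eps n \<omega>))\<^sup>2 / 2)"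
      using ib by (auto intro: order_trans)
  qed
qed

lemma zero_mean: "(\<integral>\<omega>. inner (Zt n \<omega> - xb) (eps n \<omega>) \<partial>M) = 0"
proof -
  let ?S = "PiM {..<n} (\<lambda>_. borel :: (real^'m) measure)"
  let ?T = "PiM {n} (\<lambda>_. borel :: (real^'m) measure)"
  define Wn where "Wn \<omega> = restrict (\<lambda>i. \<xi> i \<omega>) {n}" for \<omega>
  have ind0: "indep_var ?S (\<lambda>\<omega>. restrict (\<lambda>i. \<xi> i \<omega>) {..<n}) ?T (\<lambda>\<omega>. restrict (\<lambda>i. \<xi> i \<omega>) {n})"
    by (rule indep_var_restrict[OF xi_indep]) auto
  have e1: "(\<lambda>\<omega>. restrict (\<lambda>i. \<xi> i \<omega>) {..<n}) = Wr n" by (simp add: Wr_def[abs_def])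
  have ind: "indep_var ?S (Wr n) ?T Wn" using ind0 unfolding e1 Wn_def[abs_def] .
  have Wn_meas: "Wn \<in> measurable M ?T" unfolding Wn_def[abs_def] using xi_rv by (intro measurable_restrict) auto
  define M1 where "M1 = distr M ?S (Wr n)"
  define M2 where "M2 = distr M ?T Wn"
  have dist: "M1 \<Otimes>\<^sub>M M2 = distr M (?S \<Otimes>\<^sub>M ?T) (\<lambda>\<omega>. (Wr n \<omega>, Wn \<omega>))"
    using ind unfolding indep_var_distribution_eq M1_def M2_def by blast
  have p1: "prob_space M1" unfolding M1_def by (rule prob_space_distr[OF Wr_meas])
  have p2: "prob_space M2" unfolding M2_def by (rule prob_space_distr[OF Wn_meas])
  interpret PS: pair_sigma_finite M1 M2
    by (simp add: pair_sigma_finite_def prob_space_imp_sigma_finite p1 p2)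
  define g where "g p = inner (Ztw n (fst p) - xb) (GH (Yw n (fst p)) (snd p n) - gh (Yw n (fst p)))" for p
  have gm: "g \<in> borel_measurable (?S \<Otimes>\<^sub>M ?T)"
  proof -
    have y: "(\<lambda>p. Yw n (fst p)) \<in> borel_measurable (?S \<Otimes>\<^sub>M ?T)"
      using measurable_comp[OF measurable_fst Yw_meas] by (simp add: comp_def)
    have z: "(\<lambda>p. Ztw n (fst p)) \<in> borel_measurable (?S \<Otimes>\<^sub>M ?T)"
      using measurable_comp[OF measurable_fst Ztw_meas] by (simp add: comp_def)
    have cs: "(\<lambda>w. w n) \<in> measurable ?T borel"
      by (rule measurable_component_singleton) simp
    have s: "(\<lambda>p. snd p n) \<in> borel_measurable (?S \<Otimes>\<^sub>M ?T)"
      using measurable_comp[OF measurable_snd cs] by (simp add: comp_def)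
    have G: "(\<lambda>p. GH (Yw n (fst p)) (snd p n)) \<in> borel_measurable (?S \<Otimes>\<^sub>M ?T)"
      by (rule GH_comp_meas[OF y s])
    have gg: "(\<lambda>p. gh (Yw n (fst p))) \<in> borel_measurable (?S \<Otimes>\<^sub>M ?T)"
      by (rule borel_measurable_continuous_on[OF gh_cont y])
    show ?thesis unfolding g_def[abs_def] using z G gg by measurable
  qed
  have pm: "(\<lambda>\<omega>. (Wr n \<omega>, Wn \<omega>)) \<in> measurable M (?S \<Otimes>\<^sub>M ?T)"
    using Wr_meas Wn_meas by measurable
  have geq: "g (Wr n \<omega>, Wn \<omega>) = inner (Zt n \<omega> - xb) (eps n \<omega>)" for \<omega>
    by (simp add: g_def Zt_Wr Y_Wr eps_def Wn_def)
  have intM: "integrable M (\<lambda>\<omega>. g (Wr n \<omega>, Wn \<omega>))" unfolding geq by (rule inner_int)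
  have intP: "integrable (M1 \<Otimes>\<^sub>M M2) g"
    unfolding dist using integrable_distr_eq[OF pm gm] intM by simp
  have inner0: "(\<integral>w. g (x, w) \<partial>M2) = 0" for x
  proof -
    define hh where "hh s = inner (Ztw n x - xb) (GH (Yw n x) s - gh (Yw n x))" for s
    have hm: "hh \<in> borel_measurable (borel :: (real^'m) measure)"
    proof -
      have "(\<lambda>y. GH (Yw n x) y) \<in> borel_measurable (borel :: (real^'m) measure)"
        by (rule GH_comp_meas) auto
      then show ?thesis unfolding hh_def[abs_def] by measurable
    qed
    have gx: "(\<lambda>w. g (x, w)) \<in> borel_measurable ?T"
    proof -
      have cs: "(\<lambda>w. w n) \<in> measurable ?T borel"
        by (rule measurable_component_singleton) simp
      have "(\<lambda>w. hh (w n)) \<in> borel_measurable ?T" using measurable_comp[OF cs hm] by (simp add: comp_def)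
      then show ?thesis by (simp add: g_def hh_def)
    qed
    have "(\<integral>w. g (x, w) \<partial>M2) = (\<integral>\<omega>. g (x, Wn \<omega>) \<partial>M)" unfolding M2_def by (rule integral_distr[OF Wn_meas gx])
    also have "\<dots> = (\<integral>\<omega>. hh (\<xi> n \<omega>) \<partial>M)" by (simp add: g_def hh_def Wn_def)
    also have "\<dots> = (\<integral>s. hh s \<partial>distr M borel (\<xi> n))" by (rule integral_distr[OF xi_rv hm, symmetric])
    also have "\<dots> = (\<integral>s. hh s \<partial>distr M borel (\<xi> 0))" unfolding xi_ident[of n] ..
    also have "\<dots> = (\<integral>\<omega>. hh (\<xi> 0 \<omega>) \<partial>M)" by (rule integral_distr[OF xi_rv hm])
    also have "\<dots> = (\<integral>\<omega>. inner (Ztw n x - xb) (GH (Yw n x) (\<xi> 0 \<omega>)) - inner (Ztw n x - xb) (gh (Yw n x)) \<partial>M)"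
      unfolding hh_def by (simp add: inner_diff_right)
    also have "\<dots> = (\<integral>\<omega>. inner (Ztw n x - xb) (GH (Yw n x) (\<xi> 0 \<omega>)) \<partial>M) - (\<integral>\<omega>. inner (Ztw n x - xb) (gh (Yw n x)) \<partial>M)"
      using GH_unbiased[of "Yw n x"] by (intro Bochner_Integration.integral_diff) auto
    also have "(\<integral>\<omega>. inner (Ztw n x - xb) (GH (Yw n x) (\<xi> 0 \<omega>)) \<partial>M) = inner (Ztw n x - xb) (gh (Yw n x))"
      using GH_unbiased[of "Yw n x"] by simp
    also have "(\<integral>\<omega>. inner (Ztw n x - xb) (gh (Yw n x)) \<partial>M) = inner (Ztw n x - xb) (gh (Yw n x))"
      using prob_space by simp
    finally show ?thesis by simp
  qed
  have "(\<integral>\<omega>. inner (Zt n \<omega> - xb) (eps n \<omega>) \<partial>M) = (\<integral>\<omega>. g (Wr n \<omega>, Wn \<omega>) \<partial>M)" by (simp add: geq)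
  also have "\<dots> = integral\<^sup>L (distr M (?S \<Otimes>\<^sub>M ?T) (\<lambda>\<omega>. (Wr n \<omega>, Wn \<omega>))) g"
    by (rule integral_distr[OF pm gm, symmetric])
  also have "\<dots> = integral\<^sup>L (M1 \<Otimes>\<^sub>M M2) g" unfolding dist ..
  also have "\<dots> = (\<integral>x. (\<integral>y. g (x, y) \<partial>M2) \<partial>M1)"
    using PS.integral_fst[of "\<lambda>x y. g (x, y)"] intP by (simp add: case_prod_eta)
  also have "\<dots> = 0" by (simp add: inner0)
  finally show ?thesis .
qed

end

context stoch begin

definition "Vx n \<omega> = (norm (X n \<omega> - xb))\<^sup>2"
definition "Vd n \<omega> = (norm (X n \<omega> - P n \<omega>))\<^sup>2"
definition "aa n = (\<integral>\<omega>. Vx n \<omega> + Vd n \<omega> / 4 \<partial>M)"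

lemma Vx_int: "integrable M (Vx n)"
  using moments[of n] by (simp add: Vx_def[abs_def])

lemma Vd_int: "integrable M (Vd n)"
proof -
  have i: "integrable M (\<lambda>\<omega>. 2 * (norm (X n \<omega> - xb))\<^sup>2 + 2 * (norm (P n \<omega> - xb))\<^sup>2)"
    using moments[of n] by simp
  show ?thesis unfolding Vd_def[abs_def]
  proof (rule Bochner_Integration.integrable_bound[OF i])
    show "(\<lambda>\<omega>. (norm (X n \<omega> - P n \<omega>))\<^sup>2) \<in> borel_measurable M" using X_meas P_meas by measurable
    show "AE \<omega> in M. norm ((norm (X n \<omega> - P n \<omega>))\<^sup>2) \<le> norm (2 * (norm (X n \<omega> - xb))\<^sup>2 + 2 * (norm (P n \<omega> - xb))\<^sup>2)"
    proof (intro AE_I2)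
      fix \<omega>
      have "norm (X n \<omega> - P n \<omega>) \<le> norm (X n \<omega> - xb) + norm (P n \<omega> - xb)"
        using norm_triangle_ineq4[of "X n \<omega> - xb" "P n \<omega> - xb"] by simp
      then have "(norm (X n \<omega> - P n \<omega>))\<^sup>2 \<le> (norm (X n \<omega> - xb) + norm (P n \<omega> - xb))\<^sup>2"
        by (intro power_mono) auto
      also have "\<dots> \<le> 2 * (norm (X n \<omega> - xb))\<^sup>2 + 2 * (norm (P n \<omega> - xb))\<^sup>2"
      proof -
        have "0 \<le> (norm (X n \<omega> - xb) - norm (P n \<omega> - xb))\<^sup>2" by simp
        then show ?thesis by (simp add: power2_sum power2_diff)
      qed
      finally show "norm ((norm (X n \<omega> - P n \<omega>))\<^sup>2) \<le> norm (2 * (norm (X n \<omega> - xb))\<^sup>2 + 2 * (norm (P n \<omega> - xb))\<^sup>2)"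
        by simp
    qed
  qed
qed

lemma Y_eq: "Y n \<omega> = 2 *\<^sub>R X n \<omega> - P n \<omega>"
  by (simp add: Y_def X_def P_def Yw_def)

lemma gam_nu: "gam n * \<nu> \<le> 1/2"
proof -
  have p: "2 * \<nu> * (real n + 1) > 0" using nu_pos by simp
  have "gam n * \<nu> = 1 / (2 * (real n + 1))" unfolding gam_def step_def using nu_pos p by (simp add: field_simps)
  also have "\<dots> \<le> 1 / 2" by (intro divide_left_mono) auto
  finally show ?thesis .
qed

lemma pointwise:
  "(1 + 2 * gam n * \<nu> - 6 * (gam n)\<^sup>2 * \<mu>\<^sup>2) * (Vx (Suc n) \<omega> + Vd (Suc n) \<omega> / 4)
     + 2 * gam n * inner (Zt n \<omega> - xb) (eps n \<omega>)
   \<le> Vx n \<omega> + Vd n \<omega> / 4 + 2 * (gam n)\<^sup>2 * (norm (eps n \<omega>))\<^sup>2"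
proof -
  have si: "(1 + 2 * gam n * \<nu> - 6 * (gam n)\<^sup>2 * \<mu>\<^sup>2) *
          ((norm (prox (\<lambda>u. ereal (gam n) * f u) (X n \<omega> - gam n *\<^sub>R (gh (2 *\<^sub>R X n \<omega> - P n \<omega>) + eps n \<omega>)) - xb))\<^sup>2 +
           (norm (prox (\<lambda>u. ereal (gam n) * f u) (X n \<omega> - gam n *\<^sub>R (gh (2 *\<^sub>R X n \<omega> - P n \<omega>) + eps n \<omega>)) - X n \<omega>))\<^sup>2 / 4) +
          2 * gam n * inner (prox (\<lambda>u. ereal (gam n) * f u) (X n \<omega> - gam n *\<^sub>R gh (2 *\<^sub>R X n \<omega> - P n \<omega>)) - xb) (eps n \<omega>)
          \<le> (norm (X n \<omega> - xb))\<^sup>2 + (norm (X n \<omega> - P n \<omega>))\<^sup>2 / 4 + 2 * (gam n)\<^sup>2 * (norm (eps n \<omega>))\<^sup>2"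
    by (rule step_ineq[OF gam_pos gam_nu])
  have e1: "prox (\<lambda>u. ereal (gam n) * f u) (X n \<omega> - gam n *\<^sub>R (gh (2 *\<^sub>R X n \<omega> - P n \<omega>) + eps n \<omega>)) = X (Suc n) \<omega>"
    by (simp add: X_Suc Y_eq Pn_def)
  have e2: "prox (\<lambda>u. ereal (gam n) * f u) (X n \<omega> - gam n *\<^sub>R gh (2 *\<^sub>R X n \<omega> - P n \<omega>)) = Zt n \<omega>"
    by (simp add: Zt_def Ztw_def Pn_def X_def P_def Yw_def)
  show ?thesis using si unfolding e1 e2 by (simp add: Vx_def Vd_def P_Suc)
qed

lemma aa_rec:
  "(1 + 2 * gam n * \<nu> - 6 * (gam n)\<^sup>2 * \<mu>\<^sup>2) * aa (Suc n) \<le> aa n + 2 * (gam n)\<^sup>2 * max c 0"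
proof -
  let ?q = "1 + 2 * gam n * \<nu> - 6 * (gam n)\<^sup>2 * \<mu>\<^sup>2"
  have iL: "integrable M (\<lambda>\<omega>. ?q * (Vx (Suc n) \<omega> + Vd (Suc n) \<omega> / 4) + 2 * gam n * inner (Zt n \<omega> - xb) (eps n \<omega>))"
    using Vx_int Vd_int inner_int by simp
  have iR: "integrable M (\<lambda>\<omega>. Vx n \<omega> + Vd n \<omega> / 4 + 2 * (gam n)\<^sup>2 * (norm (eps n \<omega>))\<^sup>2)"
    using Vx_int Vd_int eps_sq(1) by simp
  have "(\<integral>\<omega>. ?q * (Vx (Suc n) \<omega> + Vd (Suc n) \<omega> / 4) + 2 * gam n * inner (Zt n \<omega> - xb) (eps n \<omega>) \<partial>M)
        \<le> (\<integral>\<omega>. Vx n \<omega> + Vd n \<omega> / 4 + 2 * (gam n)\<^sup>2 * (norm (eps n \<omega>))\<^sup>2 \<partial>M)"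
    by (rule Bochner_Integration.integral_mono[OF iL iR pointwise])
  moreover have "(\<integral>\<omega>. ?q * (Vx (Suc n) \<omega> + Vd (Suc n) \<omega> / 4) + 2 * gam n * inner (Zt n \<omega> - xb) (eps n \<omega>) \<partial>M)
      = ?q * aa (Suc n) + 2 * gam n * (\<integral>\<omega>. inner (Zt n \<omega> - xb) (eps n \<omega>) \<partial>M)"
    unfolding aa_def using Vx_int Vd_int inner_int by simp
  moreover have "(\<integral>\<omega>. Vx n \<omega> + Vd n \<omega> / 4 + 2 * (gam n)\<^sup>2 * (norm (eps n \<omega>))\<^sup>2 \<partial>M)
      = aa n + 2 * (gam n)\<^sup>2 * (\<integral>\<omega>. (norm (eps n \<omega>))\<^sup>2 \<partial>M)"
    unfolding aa_def using Vx_int Vd_int eps_sq(1) by simp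
  moreover have "2 * (gam n)\<^sup>2 * (\<integral>\<omega>. (norm (eps n \<omega>))\<^sup>2 \<partial>M) \<le> 2 * (gam n)\<^sup>2 * max c 0"
    using eps_sq(2) by (intro mult_left_mono) auto
  ultimately show ?thesis using zero_mean by simp
qed

lemma aa_nonneg: "0 \<le> aa n"
  unfolding aa_def by (rule integral_nonneg_AE) (auto simp: Vx_def Vd_def)

lemma rate: "\<exists>C. \<forall>n\<ge>1. (\<integral>\<^sup>+ \<omega>. ennreal ((norm (X n \<omega> - xb))\<^sup>2) \<partial>M) \<le> ennreal (C * ln (real n + 1) / (real n + 1))"
proof -
  define K where "K = 3 * \<mu>\<^sup>2 / (2 * \<nu>\<^sup>2)"
  define e where "e = max c 0 / (2 * \<nu>\<^sup>2)"
  have K: "K > 0" unfolding K_def using mu_pos nu_pos by simp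
  have e: "0 \<le> e" unfolding e_def by simp
  have rec: "(1 + 1 / (real n + 1) - K / (real n + 1)\<^sup>2) * aa (Suc n) \<le> aa n + e / (real n + 1)\<^sup>2" for n
  proof -
    have g: "gam n = 1 / (2 * \<nu> * (real n + 1))" by (simp add: gam_def step_def)
    have p0: "2 * \<nu> * (real n + 1) > 0" using nu_pos by simp
    have p1: "\<nu> * 2 + \<nu> * (real n * 2) = 2 * \<nu> * (real n + 1)" by (simp add: algebra_simps)
    have p: "2 * \<nu> * (real n + 1) > 0" "\<nu> * 2 + \<nu> * (real n * 2) \<noteq> 0" using p0 p1 by auto
    have 1: "2 * gam n * \<nu> = 1 / (real n + 1)" unfolding g using nu_pos p by (simp add: field_simps)
    define m where "m = real n + 1"
    have m: "m > 0" by (simp add: m_def)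
    have g2: "(gam n)\<^sup>2 = 1 / (4 * \<nu>\<^sup>2 * m\<^sup>2)" unfolding g m_def[symmetric]
      by (simp add: power_mult_distrib power_divide)
    have nz: "\<nu> \<noteq> 0" using nu_pos by simp
    have 2: "6 * (gam n)\<^sup>2 * \<mu>\<^sup>2 = K / (real n + 1)\<^sup>2" unfolding g2 K_def m_def[symmetric]
      using m nz by (simp add: field_simps)
    have 3: "2 * (gam n)\<^sup>2 * max c 0 = e / (real n + 1)\<^sup>2" unfolding g2 e_def m_def[symmetric]
      using m nz by (simp add: field_simps)
    show ?thesis using aa_rec[of n] unfolding 1 2 3 .
  qed
  obtain C where C: "\<forall>n\<ge>1. aa n \<le> C * ln (real n + 1) / (real n + 1)"
    using rate_lemma[OF aa_nonneg K e rec] by blast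
  show ?thesis
  proof (intro exI allI impI)
    fix n :: nat assume n: "1 \<le> n"
    have "(\<integral>\<^sup>+ \<omega>. ennreal ((norm (X n \<omega> - xb))\<^sup>2) \<partial>M) = ennreal (\<integral>\<omega>. Vx n \<omega> \<partial>M)"
      unfolding Vx_def[symmetric] by (rule nn_integral_eq_integral[OF Vx_int]) (auto simp: Vx_def)
    also have "(\<integral>\<omega>. Vx n \<omega> \<partial>M) \<le> aa n"
      unfolding aa_def
    proof (rule Bochner_Integration.integral_mono)
      show "integrable M (Vx n)" by (rule Vx_int)
      show "integrable M (\<lambda>\<omega>. Vx n \<omega> + Vd n \<omega> / 4)" using Vx_int Vd_int by simp
      show "Vx n \<omega> \<le> Vx n \<omega> + Vd n \<omega> / 4" for \<omega> by (simp add: Vd_def)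
    qed
    also have "aa n \<le> C * ln (real n + 1) / (real n + 1)" using C n by auto
    finally show "(\<integral>\<^sup>+ \<omega>. ennreal ((norm (X n \<omega> - xb))\<^sup>2) \<partial>M) \<le> ennreal (C * ln (real n + 1) / (real n + 1))"
      by (simp add: ennreal_leI)
  qed
qed

end

theorem mainTheorem8:
  fixes f :: "'a::{real_inner, complete_space, second_countable_topology} \<Rightarrow> ereal"
    and h :: "'a \<Rightarrow> real" and gh :: "'a \<Rightarrow> 'a"
    and H :: "'a \<Rightarrow> real^'m \<Rightarrow> real" and GH :: "'a \<Rightarrow> real^'m \<Rightarrow> 'a"
    and \<Omega>P :: "(real^'m) set"
    and M :: "'w measure" and \<xi> :: "nat \<Rightarrow> 'w \<Rightarrow> real^'m"
    and \<nu> \<mu> c :: real and x0 xm1 :: 'a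
  assumes f_Gamma0: "f \<in> Gamma0"
    and nu_pos: "\<nu> > 0"
    and f_strong: "strongly_convex \<nu> f"
    and h_convex: "convex_on UNIV h"
    and h_grad: "\<And>x. (h has_derivative (\<lambda>v. inner (gh x) v)) (at x)"
    and mu_pos: "\<mu> > 0"
    and gh_lip: "\<And>x y. norm (gh x - gh y) \<le> \<mu> * norm (x - y)"
    and prob: "prob_space M"
    and xi_rv: "\<And>n. \<xi> n \<in> borel_measurable M"
    and xi_indep: "prob_space.indep_vars M (\<lambda>_. borel) \<xi> UNIV"
    and xi_ident: "\<And>n. distr M borel (\<xi> n) = distr M borel (\<xi> 0)"
    and xi_supp: "AE \<omega> in M. \<xi> 0 \<omega> \<in> \<Omega>P"
    and H_convex: "\<And>z. z \<in> \<Omega>P \<Longrightarrow> convex_on UNIV (\<lambda>x. H x z)"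
    and H_grad: "\<And>z x. z \<in> \<Omega>P \<Longrightarrow> ((\<lambda>x. H x z) has_derivative (\<lambda>v. inner (GH x z) v)) (at x)"
    and GH_meas: "(\<lambda>(x, z). GH x z) \<in> borel_measurable (borel \<Otimes>\<^sub>M borel)"
    and h_expect: "\<And>x. integrable M (\<lambda>\<omega>. H x (\<xi> 0 \<omega>)) \<and> h x = (\<integral>\<omega>. H x (\<xi> 0 \<omega>) \<partial>M)"
    and GH_unbiased: "\<And>x. integrable M (\<lambda>\<omega>. GH x (\<xi> 0 \<omega>)) \<and> (\<integral>\<omega>. GH x (\<xi> 0 \<omega>) \<partial>M) = gh x"
    and zer_nonempty: "\<exists>x. - gh x \<in> subdiff f x"
    and var_bound: "\<And>n. AE \<omega> in M.
          nn_cond_exp M (gen_sigma M \<xi> n)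
            (\<lambda>\<omega>'. ennreal ((norm (GH (fbf_y f GH \<nu> x0 xm1 (\<lambda>k. \<xi> k \<omega>') n) (\<xi> n \<omega>')
                                 - gh (fbf_y f GH \<nu> x0 xm1 (\<lambda>k. \<xi> k \<omega>') n)))\<^sup>2)) \<omega>
          \<le> ennreal c"
  shows "\<exists>xbar. (\<forall>y. f xbar + ereal (h xbar) \<le> f y + ereal (h y))
           \<and> (\<forall>z. (\<forall>y. f z + ereal (h z) \<le> f y + ereal (h y)) \<longrightarrow> z = xbar)
           \<and> (\<exists>C. \<forall>n. n > (LEAST k::nat. real k > 2 / \<nu> * \<mu> * (1 + sqrt 2)) \<longrightarrow>
                 (\<integral>\<^sup>+ \<omega>. ennreal ((norm (fbf_x f GH \<nu> x0 xm1 (\<lambda>k. \<xi> k \<omega>) n - xbar))\<^sup>2) \<partial>M)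
                   \<le> ennreal (C * ln (real n + 1) / (real n + 1)))"
proof -
  obtain xb where xb: "- gh xb \<in> subdiff f xb" using zer_nonempty by auto
  have FH: "fhsetup f \<nu> h gh \<mu> xb"
  proof (unfold_locales)
    show "\<exists>x u. u \<in> subdiff f x" using xb by blast
  qed (fact f_Gamma0 nu_pos f_strong h_convex mu_pos xb | rule h_grad gh_lip)+
  interpret S: stoch f \<nu> h gh \<mu> xb M GH \<xi> x0 xm1 c
  proof (rule stoch.intro[OF FH prob], rule stoch_axioms.intro)
  qed (fact xi_indep GH_meas | rule xi_rv xi_ident GH_unbiased var_bound)+
  obtain C where C: "\<forall>n\<ge>1. (\<integral>\<^sup>+ \<omega>. ennreal ((norm (S.X n \<omega> - xb))\<^sup>2) \<partial>M) \<le> ennreal (C * ln (real n + 1) / (real n + 1))"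
    using S.rate by blast
  have fx: "fbf_x f GH \<nu> x0 xm1 (\<lambda>k. \<xi> k \<omega>) n = S.X n \<omega>" for n \<omega>
    by (simp add: fbf_x_def S.X_def S.Xw_def S.st_def)
  have part3: "\<exists>C. \<forall>n. n > (LEAST k::nat. real k > 2 / \<nu> * \<mu> * (1 + sqrt 2)) \<longrightarrow>
                 (\<integral>\<^sup>+ \<omega>. ennreal ((norm (fbf_x f GH \<nu> x0 xm1 (\<lambda>k. \<xi> k \<omega>) n - xb))\<^sup>2) \<partial>M)
                   \<le> ennreal (C * ln (real n + 1) / (real n + 1))"
  proof (intro exI allI impI)
    fix n assume "n > (LEAST k::nat. real k > 2 / \<nu> * \<mu> * (1 + sqrt 2))"
    then have "1 \<le> n" by simp
    then show "(\<integral>\<^sup>+ \<omega>. ennreal ((norm (fbf_x f GH \<nu> x0 xm1 (\<lambda>k. \<xi> k \<omega>) n - xb))\<^sup>2) \<partial>M)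
                   \<le> ennreal (C * ln (real n + 1) / (real n + 1))"
      using C by (simp add: fx)
  qed
  show ?thesis
    using S.xb_min S.min_unique part3 by blast
qed

end
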